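(* In the setting below, the error $e^k=\tilde q_\gamma^k-q_\gamma^k$ of the regularized block Kaczmarz method satisfies, with $\delta_\gamma=\|A^*M_\gamma(\tilde p-p)\|$: (i) if $2\le k\le 2\sigma_\gamma^{-2}$, then $\displaystyle \|e^k\|\le \frac{\delta_\gamma\sigma_\gamma^2}{2\big(1-(1-\sigma_\gamma^2)^{1/2}\big)}\,k$; (ii) if $k>2\sigma_\gamma^{-2}$, then $\displaystyle \|e^k\|\le \frac{\delta_\gamma}{1-(1-\sigma_\gamma^2)^{1/2}}$. Setting: $A_j\in\mathbb{C}^{r_j\times n}$ ($j=1,\dots,m$), $A=\begin{bmatrix}A_1\\ \vdots\\ A_m\end{bmatrix}$ of full row rank, $\gamma>0$, $D_\gamma=\operatorname{diag}(\gamma I+A_1A_1^*,\dots,\gamma I+A_mA_m^* )$, $L$ the strictly block lower triangular matrix with $(i,j)$ block $A_iA_j^*$ for $i>j$, $M_\gamma=(D_\gamma+L)^{-1}$, $R_\gamma=(D_{2\gamma})^{1/2}M_\gamma A$ ($D_{2\gamma}$ = $D_\gamma$ with $\gamma$ replaced by $2\gamma$), $\sigma_\gamma$ the smallest nonzero singular value of $R_\gamma$; $q_\gamma^k$, $\tilde q_\gamma^k$ are the iterates, starting from $0$, of $q^{k+1}=(I-A^*M_\gamma A)q^k+A^*M_\gamma p$ with data $p$, respectively $\tilde p$ (equivalently, of the regularized block Kaczmarz sweep $q_j=q_{j-1}+A_j^*(\gamma I+A_jA_j^* )^{-1}(p_j-A_jq_{j-1})$, $j=1,\dots,m$).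
   Context: $A^*$ is the conjugate transpose; norms are Euclidean / operator 2-norms; $(D_{2\gamma})^{1/2}$ is the Hermitian positive definite square root; $0<\sigma_\gamma\le1$. *)

theory Defs
  imports "Jordan_Normal_Form.Gauss_Jordan_Elimination" "Jordan_Normal_Form.Schur_Decomposition"
    "Jordan_Normal_Form.DL_Rank" "Jordan_Normal_Form.Char_Poly"
begin

(* Blocks A_1..A_m are the list As; each A_j is r_j x n. *)

definition blk_off :: "complex mat list \<Rightarrow> nat \<Rightarrow> nat" where
  "blk_off As j = sum_list (map dim_row (take j As))"

(* block index (0-based) of global row index a *)
definition blk_of :: "complex mat list \<Rightarrow> nat \<Rightarrow> nat" where
  "blk_of As a = (LEAST j. a < blk_off As (Suc j))"

definition stack_blocks :: "complex mat list \<Rightarrow> nat \<Rightarrow> complex mat" where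
  "stack_blocks As n = foldr (\<lambda>B C. B @\<^sub>r C) As (0\<^sub>m 0 n)"

definition D_mat :: "complex mat list \<Rightarrow> nat \<Rightarrow> real \<Rightarrow> complex mat" where
  "D_mat As n \<gamma> = (let A = stack_blocks As n; G = A * mat_adjoint A; N = dim_row A in
     mat N N (\<lambda>(a,b). if blk_of As a = blk_of As b
                       then (if a = b then complex_of_real \<gamma> else 0) + G $$ (a,b) else 0))"

definition L_mat :: "complex mat list \<Rightarrow> nat \<Rightarrow> complex mat" where
  "L_mat As n = (let A = stack_blocks As n; G = A * mat_adjoint A; N = dim_row A in
     mat N N (\<lambda>(a,b). if blk_of As a > blk_of As b then G $$ (a,b) else 0))"

definition M_mat :: "complex mat list \<Rightarrow> nat \<Rightarrow> real \<Rightarrow> complex mat" where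
  "M_mat As n \<gamma> = the (mat_inverse (D_mat As n \<gamma> + L_mat As n))"

definition hpd_sqrt :: "complex mat \<Rightarrow> complex mat" where
  "hpd_sqrt D = (THE S. S \<in> carrier_mat (dim_row D) (dim_row D) \<and> mat_adjoint S = S \<and>
      (\<forall>v \<in> carrier_vec (dim_row D). v \<noteq> 0\<^sub>v (dim_row D) \<longrightarrow>
          0 < Re (v \<bullet>c (S *\<^sub>v v))) \<and> S * S = D)"

definition R_mat :: "complex mat list \<Rightarrow> nat \<Rightarrow> real \<Rightarrow> complex mat" where
  "R_mat As n \<gamma> = hpd_sqrt (D_mat As n (2 * \<gamma>)) * M_mat As n \<gamma> * stack_blocks As n"

definition min_sing_val :: "complex mat \<Rightarrow> real" where
  "min_sing_val R = sqrt (Min {x::real. x \<noteq> 0 \<and> eigenvalue (mat_adjoint R * R) (complex_of_real x)})"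

definition sigma :: "complex mat list \<Rightarrow> nat \<Rightarrow> real \<Rightarrow> real" where
  "sigma As n \<gamma> = min_sing_val (R_mat As n \<gamma>)"

definition iterate_q :: "complex mat list \<Rightarrow> nat \<Rightarrow> real \<Rightarrow> complex vec \<Rightarrow> nat \<Rightarrow> complex vec" where
  "iterate_q As n \<gamma> p k = (let A = stack_blocks As n; M = M_mat As n \<gamma> in
     ((\<lambda>q. (1\<^sub>m n - mat_adjoint A * M * A) *\<^sub>v q + (mat_adjoint A * M) *\<^sub>v p) ^^ k) (0\<^sub>v n))"

definition vnorm :: "complex vec \<Rightarrow> real" where
  "vnorm v = sqrt (\<Sum>i<dim_vec v. (cmod (v $ i))\<^sup>2)"

end

theory Submission
  imports Defs "HOL-Analysis.L2_Norm"
begin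


lemma adj_dim[simp]: "dim_row (mat_adjoint A) = dim_col A" "dim_col (mat_adjoint A) = dim_row A"
  unfolding mat_adjoint_def by auto

lemma adj_index[simp]: "i < dim_col A \<Longrightarrow> j < dim_row A \<Longrightarrow> mat_adjoint A $$ (i,j) = cnj (A $$ (j,i))"
  unfolding mat_adjoint_def by (simp add: mat_of_rows_index)

lemma adj_carrier[simp,intro]: "A \<in> carrier_mat r c \<Longrightarrow> mat_adjoint A \<in> carrier_mat c r"
  by auto

lemma adj_adj[simp]: "mat_adjoint (mat_adjoint (A::complex mat)) = A"
  by (rule eq_matI, auto)

lemma adj_mult: fixes A B :: "complex mat"
  assumes "A \<in> carrier_mat r k" "B \<in> carrier_mat k c"
  shows "mat_adjoint (A * B) = mat_adjoint B * mat_adjoint A"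
proof (rule eq_matI)
  fix i j assume i: "i < dim_row (mat_adjoint B * mat_adjoint A)" and j: "j < dim_col (mat_adjoint B * mat_adjoint A)"
  then have ic: "i < c" and jr: "j < r" using assms by auto
  have "mat_adjoint (A * B) $$ (i, j) = cnj (\<Sum>l\<in>{0..<k}. A $$ (j,l) * B $$ (l,i))"
    using assms ic jr by (simp add: scalar_prod_def)
  also have "\<dots> = (\<Sum>l\<in>{0..<k}. cnj (B $$ (l,i)) * cnj (A $$ (j,l)))"
    by (simp add: cnj_sum mult.commute)
  also have "\<dots> = (mat_adjoint B * mat_adjoint A) $$ (i,j)"
    using assms ic jr by (simp add: scalar_prod_def)
  finally show "mat_adjoint (A * B) $$ (i, j) = (mat_adjoint B * mat_adjoint A) $$ (i,j)" .
qed (insert assms, auto)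

lemma adj_add: fixes A B :: "complex mat"
  assumes "A \<in> carrier_mat r c" "B \<in> carrier_mat r c"
  shows "mat_adjoint (A + B) = mat_adjoint A + mat_adjoint B"
  by (rule eq_matI, insert assms, auto)

lemma adj_minus: fixes A B :: "complex mat"
  assumes "A \<in> carrier_mat r c" "B \<in> carrier_mat r c"
  shows "mat_adjoint (A - B) = mat_adjoint A - mat_adjoint B"
  by (rule eq_matI, insert assms, auto)

lemma adj_one[simp]: "mat_adjoint (1\<^sub>m n :: complex mat) = 1\<^sub>m n"
  by (rule eq_matI, auto)

lemma cip_sum: "dim_vec y = n \<Longrightarrow> x \<bullet>c y = (\<Sum>i\<in>{0..<n}. x $ i * cnj (y $ i))"
  by (simp add: scalar_prod_def)

lemma adj_mult_vec: fixes A :: "complex mat"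
  assumes A: "A \<in> carrier_mat r c" and x: "x \<in> carrier_vec c" and y: "y \<in> carrier_vec r"
  shows "(A *\<^sub>v x) \<bullet>c y = x \<bullet>c (mat_adjoint A *\<^sub>v y)"
proof -
  have "(A *\<^sub>v x) \<bullet>c y = (\<Sum>i\<in>{0..<r}. (\<Sum>j\<in>{0..<c}. A $$ (i,j) * x $ j) * cnj (y $ i))"
    using A x y by (simp add: cip_sum scalar_prod_def)
  also have "\<dots> = (\<Sum>i\<in>{0..<r}. \<Sum>j\<in>{0..<c}. x $ j * (A $$ (i,j) * cnj (y $ i)))"
    by (simp add: sum_distrib_left sum_distrib_right mult_ac)
  also have "\<dots> = (\<Sum>j\<in>{0..<c}. \<Sum>i\<in>{0..<r}. x $ j * (A $$ (i,j) * cnj (y $ i)))"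
    by (rule sum.swap)
  also have "\<dots> = (\<Sum>j\<in>{0..<c}. x $ j * cnj (\<Sum>i\<in>{0..<r}. cnj (A $$ (i,j)) * y $ i))"
    by (simp add: sum_distrib_left cnj_sum)
  also have "\<dots> = x \<bullet>c (mat_adjoint A *\<^sub>v y)"
    using A x y by (simp add: cip_sum scalar_prod_def)
  finally show ?thesis .
qed

lemma cip_comm: fixes x y :: "complex vec"
  assumes "dim_vec x = dim_vec y" shows "x \<bullet>c y = cnj (y \<bullet>c x)"
  using assms by (simp add: cip_sum cnj_sum mult.commute)

lemma cip_self: fixes x :: "complex vec"
  shows "x \<bullet>c x = complex_of_real ((vnorm x)\<^sup>2)"
proof -
  have "x \<bullet>c x = (\<Sum>i\<in>{0..<dim_vec x}. x $ i * cnj (x $ i))"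
    by (simp add: cip_sum)
  also have "\<dots> = (\<Sum>i\<in>{0..<dim_vec x}. complex_of_real ((cmod (x $ i))\<^sup>2))"
    by (rule sum.cong, simp_all only: complex_norm_square)
  also have "\<dots> = complex_of_real ((vnorm x)\<^sup>2)"
    unfolding vnorm_def by (simp add: sum_nonneg atLeast0LessThan)
  finally show ?thesis .
qed

lemma vnorm_nonneg: "vnorm x \<ge> 0" unfolding vnorm_def by (simp add: sum_nonneg)

lemma vnorm_L2: "vnorm x = L2_set (\<lambda>i. cmod (x $ i)) {..<dim_vec x}"
  unfolding vnorm_def L2_set_def by simp

lemma vnorm_triangle: fixes x y :: "complex vec"
  assumes "dim_vec x = dim_vec y"
  shows "vnorm (x + y) \<le> vnorm x + vnorm y"
proof -
  have "vnorm (x + y) = L2_set (\<lambda>i. cmod (x $ i + y $ i)) {..<dim_vec x}"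
    using assms unfolding vnorm_L2 by (simp, intro L2_set_cong, auto)
  also have "\<dots> \<le> L2_set (\<lambda>i. cmod (x $ i) + cmod (y $ i)) {..<dim_vec x}"
    by (rule L2_set_mono, auto simp: norm_triangle_ineq)
  also have "\<dots> \<le> L2_set (\<lambda>i. cmod (x $ i)) {..<dim_vec x} + L2_set (\<lambda>i. cmod (y $ i)) {..<dim_vec x}"
    by (rule L2_set_triangle_ineq)
  finally show ?thesis using assms by (simp add: vnorm_L2)
qed

lemma vnorm_zero_iff: "vnorm x = 0 \<longleftrightarrow> x = 0\<^sub>v (dim_vec x)"
proof
  assume "vnorm x = 0"
  then have "(\<Sum>i<dim_vec x. (cmod (x $ i))\<^sup>2) = 0" unfolding vnorm_def by simp
  then have "\<forall>i\<in>{..<dim_vec x}. (cmod (x $ i))\<^sup>2 = 0"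
    by (subst (asm) sum_nonneg_eq_0_iff, auto)
  then show "x = 0\<^sub>v (dim_vec x)" by (intro eq_vecI, auto)
next
  assume h: "x = 0\<^sub>v (dim_vec x)"
  have "\<And>i. i < dim_vec x \<Longrightarrow> x $ i = 0" by (subst h, simp)
  then show "vnorm x = 0" unfolding vnorm_def by simp
qed


definition dmat :: "nat \<Rightarrow> (nat \<Rightarrow> real) \<Rightarrow> complex mat" where
  "dmat n d = mat n n (\<lambda>(i,j). if i = j then complex_of_real (d i) else 0)"

lemma dmat_carrier[simp,intro]: "dmat n d \<in> carrier_mat n n" unfolding dmat_def by auto
lemma dmat_dim[simp]: "dim_row (dmat n d) = n" "dim_col (dmat n d) = n" unfolding dmat_def by auto
lemma dmat_index[simp]: "i < n \<Longrightarrow> j < n \<Longrightarrow> dmat n d $$ (i,j) = (if i = j then complex_of_real (d i) else 0)"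
  unfolding dmat_def by auto

definition unitary :: "complex mat \<Rightarrow> nat \<Rightarrow> bool" where
  "unitary U n \<longleftrightarrow> U \<in> carrier_mat n n \<and> mat_adjoint U * U = 1\<^sub>m n \<and> U * mat_adjoint U = 1\<^sub>m n"

lemma sum_Suc_shift: "(\<Sum>k\<in>{0..<Suc m}. f k) = f 0 + (\<Sum>k\<in>{0..<m}. f (Suc k))"
  by (induct m) (auto simp: add.assoc)

lemma mult_dmat_index: assumes "X \<in> carrier_mat r n" "i < r" "j < n"
  shows "(X * dmat n d) $$ (i,j) = X $$ (i,j) * complex_of_real (d j)"
proof -
  have "(X * dmat n d) $$ (i,j) = (\<Sum>k\<in>{0..<n}. X $$ (i,k) * (if k = j then complex_of_real (d k) else 0))"
    using assms by (simp add: scalar_prod_def)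
  also have "\<dots> = (\<Sum>k\<in>{0..<n}. if k = j then X $$ (i,k) * complex_of_real (d k) else 0)"
    by (rule sum.cong, auto)
  also have "\<dots> = X $$ (i,j) * complex_of_real (d j)" using assms by simp
  finally show ?thesis .
qed

lemma adj_mult_index: fixes U X :: "complex mat" assumes "U \<in> carrier_mat r c" "X \<in> carrier_mat r c'" "i < c" "j < c'"
  shows "(mat_adjoint U * X) $$ (i,j) = col X j \<bullet>c col U i"
  using assms by (auto simp: scalar_prod_def mult.commute carrier_matD intro!: sum.cong)

lemma cip_smult: fixes x y :: "complex vec"
  assumes "dim_vec x = dim_vec y"
  shows "(a \<cdot>\<^sub>v x) \<bullet>c (b \<cdot>\<^sub>v y) = a * cnj b * (x \<bullet>c y)"
  using assms by (simp add: cip_sum sum_distrib_left mult_ac)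

lemma nf_aux: "r > 0 \<Longrightarrow> complex_of_real (1 / sqrt r) * cnj (complex_of_real (1 / sqrt r)) * complex_of_real r = 1"
proof -
  assume r: "r > 0"
  have "1 / sqrt r * (1 / sqrt r) * r = 1" using r
    by (simp add: field_simps)
  then have "complex_of_real (1 / sqrt r * (1 / sqrt r) * r) = 1" by simp
  then show ?thesis by (metis complex_cnj_complex_of_real of_real_mult)
qed

lemma cip_smult_left: fixes x y :: "complex vec"
  assumes "dim_vec x = dim_vec y"
  shows "(a \<cdot>\<^sub>v x) \<bullet>c y = a * (x \<bullet>c y)"
  using assms by (simp add: cip_sum sum_distrib_left mult_ac)

lemma col_cip_sum: fixes X :: "complex mat"
  assumes "i < dim_col X" "j < dim_col X"
  shows "col X j \<bullet>c col X i = (\<Sum>k\<in>{0..<dim_row X}. X $$ (k,j) * cnj (X $$ (k,i)))"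
  using assms by (simp add: cip_sum)

lemma real_of_cnj: "cnj e = e \<Longrightarrow> e = complex_of_real (Re e)"
  by (simp add: complex_eq_iff)

theorem spectral:
  fixes H :: "complex mat"
  assumes "H \<in> carrier_mat n n" "mat_adjoint H = H"
  shows "\<exists>U d. unitary U n \<and> H * U = U * dmat n d"
  using assms
proof (induct n arbitrary: H)
  case 0
  show ?case
    by (rule exI[of _ "1\<^sub>m 0"], rule exI[of _ "\<lambda>_. 0"], insert 0, auto simp: unitary_def intro!: eq_matI)
next
  case (Suc m H)
  define n where "n = Suc m"
  have H: "H \<in> carrier_mat n n" and herm: "mat_adjoint H = H" using Suc(2,3) n_def by auto
  obtain as where cp: "char_poly H = (\<Prod>a\<leftarrow>as. [:- a, 1:])" and las: "length as = n"
    using char_poly_factorized[OF H] by blast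
  then obtain e es where as: "as = e # es" unfolding n_def by (cases as) auto
  have eH: "eigenvalue H e" unfolding eigenvalue_root_char_poly[OF H] cp as by simp
  define v where "v = find_eigenvector H e"
  have ev: "eigenvector H v e" using find_eigenvector[OF H eH] v_def by simp
  hence v: "v \<in> carrier_vec n" "v \<noteq> 0\<^sub>v n" "H *\<^sub>v v = e \<cdot>\<^sub>v v" unfolding eigenvector_def using H by auto
  interpret cof_vec_space n "TYPE(complex)" .
  define b where "b = basis_completion v"
  from basis_completion[OF v(1) v(2), folded b_def]
  have b: "set b \<subseteq> carrier_vec n" "distinct b" "\<not> lin_dep (set b)" "length b = n" "hd b = v" by auto
  define ws where "ws = gram_schmidt n b"
  from gram_schmidt_result[OF b(1) b(2) b(3) ws_def]
  have ws: "corthogonal ws" "set ws \<subseteq> carrier_vec n" "length ws = n" using b by auto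
  from b(4) b(5) obtain vs where bv: "b = v # vs" unfolding n_def by (cases b) auto
  have hdws: "hd ws = v" unfolding ws_def bv using v(1) by simp
  have ws0: "ws ! 0 = v" using hdws ws(3) unfolding n_def by (cases ws) auto
  define nf where "nf w = complex_of_real (1 / sqrt (Re (w \<bullet>c w)))" for w :: "complex vec"
  define us where "us = map (\<lambda>w. nf w \<cdot>\<^sub>v w) ws"
  define U1 where "U1 = mat_of_cols n us"
  have lus: "length us = n" using ws unfolding us_def by auto
  have usc: "\<And>i. i < n \<Longrightarrow> us ! i \<in> carrier_vec n" using ws unfolding us_def by auto
  have U1: "U1 \<in> carrier_mat n n" unfolding U1_def using lus by auto
  have colU1: "\<And>i. i < n \<Longrightarrow> col U1 i = us ! i" unfolding U1_def using lus usc by simp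
  have orth: "col U1 j \<bullet>c col U1 i = (if i = j then 1 else 0)" if ij: "i < n" "j < n" for i j
  proof -
    have wi: "ws ! i \<in> carrier_vec n" "ws ! j \<in> carrier_vec n" using ws ij by auto
    have cj: "col U1 j = nf (ws ! j) \<cdot>\<^sub>v ws ! j" "col U1 i = nf (ws ! i) \<cdot>\<^sub>v ws ! i"
      using ij ws(3) by (simp_all add: colU1 us_def)
    have "col U1 j \<bullet>c col U1 i = nf (ws ! j) * cnj (nf (ws ! i)) * (ws ! j \<bullet>c ws ! i)"
      unfolding cj by (rule cip_smult, insert wi, auto)
    also have "\<dots> = (if i = j then 1 else 0)"
    proof (cases "i = j")
      case True
      have "ws ! j \<bullet>c ws ! j \<noteq> 0" using corthogonalD[OF ws(1), of j j] ij ws(3) by auto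
      then have pos: "(vnorm (ws ! j))\<^sup>2 \<noteq> 0" by (simp add: cip_self)
      then have r: "(vnorm (ws ! j))\<^sup>2 > 0" by (simp add: less_le)
      have "nf (ws ! j) * cnj (nf (ws ! i)) * (ws ! j \<bullet>c ws ! i) = 1"
        unfolding True nf_def cip_self Re_complex_of_real by (rule nf_aux[OF r])
      then show ?thesis using True by simp
    next
      case False
      then show ?thesis using corthogonalD[OF ws(1), of j i] ij ws(3) by auto
    qed
    finally show ?thesis .
  qed
  have U1u: "mat_adjoint U1 * U1 = 1\<^sub>m n"
  proof (rule eq_matI)
    fix i j assume "i < dim_row (1\<^sub>m n)" "j < dim_col (1\<^sub>m n)"
    then show "(mat_adjoint U1 * U1) $$ (i,j) = 1\<^sub>m n $$ (i,j)"
      by (subst adj_mult_index[OF U1 U1], auto simp: orth)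
  qed (insert U1, auto)
  have U1u': "U1 * mat_adjoint U1 = 1\<^sub>m n"
    using mat_mult_left_right_inverse[OF _ U1 U1u] U1 by auto
  have c0: "col U1 0 = nf v \<cdot>\<^sub>v v" using ws0 ws(3) by (simp add: colU1 n_def us_def)
  have col0: "H *\<^sub>v col U1 0 = e \<cdot>\<^sub>v col U1 0"
    unfolding c0 by (simp add: mult_mat_vec[OF H v(1)] v(3) smult_smult_assoc mult.commute)
  define A' where "A' = mat_adjoint U1 * (H * U1)"
  have A': "A' \<in> carrier_mat n n" using U1 H unfolding A'_def by auto
  have ucar: "\<And>j. j < n \<Longrightarrow> col U1 j \<in> carrier_vec n" using U1 by auto
  have HU1c: "H * U1 \<in> carrier_mat n n" using H U1 by auto
  have A'idx: "A' $$ (i,j) = (H *\<^sub>v col U1 j) \<bullet>c col U1 i" if "i<n" "j<n" for i j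
  proof -
    have "A' $$ (i,j) = col (H * U1) j \<bullet>c col U1 i" unfolding A'_def by (rule adj_mult_index[OF U1 HU1c that])
    also have "col (H * U1) j = H *\<^sub>v col U1 j" by (rule col_mult2[OF H U1 that(2)])
    finally show ?thesis .
  qed
  have A'herm: "A' $$ (i,j) = cnj (A' $$ (j,i))" if "i<n" "j<n" for i j
  proof -
    have "A' $$ (i,j) = col U1 j \<bullet>c (H *\<^sub>v col U1 i)"
      using that by (simp add: A'idx adj_mult_vec[OF H ucar ucar] herm)
    also have "\<dots> = cnj (A' $$ (j,i))" using that H U1
      by (simp add: A'idx, intro cip_comm, simp)
    finally show ?thesis .
  qed
  have A'col0: "A' $$ (i,0) = (if i = 0 then e else 0)" if "i<n" for i
  proof -
    have n0: "0 < n" unfolding n_def by simp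
    have "A' $$ (i,0) = e * (col U1 0 \<bullet>c col U1 i)"
      using that n0 ucar by (simp add: A'idx col0 cip_smult_left)
    then show ?thesis using orth[OF that n0] by simp
  qed
  have ereal: "e = complex_of_real (Re e)"
    using A'herm[of 0 0] A'col0[of 0] unfolding n_def by (intro real_of_cnj) simp
  have A'row0: "A' $$ (0,j) = (if j = 0 then e else 0)" if "j<n" for j
    using A'herm[of 0 j] A'col0[of j] that unfolding n_def by (cases "j = 0") auto
  define H3 where "H3 = mat m m (\<lambda>(i,j). A' $$ (Suc i, Suc j))"
  have H3: "H3 \<in> carrier_mat m m" by (simp add: H3_def)
  have H3h: "mat_adjoint H3 = H3"
  proof (rule eq_matI)
    fix i j assume ij: "i < dim_row H3" "j < dim_col H3"
    then have "i < m" "j < m" using H3 by auto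
    then show "mat_adjoint H3 $$ (i,j) = H3 $$ (i,j)"
      using A'herm[of "Suc i" "Suc j"] by (simp add: H3_def n_def)
  qed (insert H3, auto)
  obtain U3 d3 where U3: "unitary U3 m" and HU3: "H3 * U3 = U3 * dmat m d3" 
    using Suc(1)[OF H3 H3h] by blast
  have U3c: "U3 \<in> carrier_mat m m" and U3u: "mat_adjoint U3 * U3 = 1\<^sub>m m" 
    using U3 unfolding unitary_def by auto
  define U2 where "U2 = mat n n (\<lambda>(i,j). if i = 0 then (if j = 0 then 1 else 0) 
      else if j = 0 then 0 else U3 $$ (i - 1, j - 1))"
  have U2: "U2 \<in> carrier_mat n n" unfolding U2_def by simp
  define d where "d = (\<lambda>j. if j = 0 then Re e else d3 (j - 1))"
  have U2cip: "col U2 j \<bullet>c col U2 i = (if i = j then 1 else 0)" if "i < n" "j < n" for i j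
  proof -
    have "col U2 j \<bullet>c col U2 i = (\<Sum>k\<in>{0..<Suc m}. U2 $$ (k,j) * cnj (U2 $$ (k,i)))"
      using that U2 by (simp add: col_cip_sum n_def)
    also have "\<dots> = U2 $$ (0,j) * cnj (U2 $$ (0,i)) + (\<Sum>k\<in>{0..<m}. U2 $$ (Suc k,j) * cnj (U2 $$ (Suc k,i)))"
      by (rule sum_Suc_shift)
    also have "\<dots> = (if i = j then 1 else 0)"
    proof (cases i)
      case 0
      then show ?thesis using that by (cases j, auto simp: U2_def n_def)
    next
      case (Suc i')
      show ?thesis
      proof (cases j)
        case 0
        then show ?thesis using that Suc by (auto simp: U2_def n_def)
      next
        case (Suc j')
        have "(\<Sum>k\<in>{0..<m}. U2 $$ (Suc k,j) * cnj (U2 $$ (Suc k,i))) 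
            = (\<Sum>k\<in>{0..<m}. U3 $$ (k,j') * cnj (U3 $$ (k,i')))"
          using that Suc \<open>i = Suc i'\<close> by (intro sum.cong, auto simp: U2_def n_def)
        also have "\<dots> = (mat_adjoint U3 * U3) $$ (i', j')"
          using that Suc \<open>i = Suc i'\<close> U3c 
          by (subst adj_mult_index[OF U3c U3c], auto simp: n_def col_cip_sum)
        also have "\<dots> = (if i' = j' then 1 else 0)" using that Suc \<open>i = Suc i'\<close> U3u by (auto simp: n_def)
        finally show ?thesis using that Suc \<open>i = Suc i'\<close> by (auto simp: U2_def n_def)
      qed
    qed
    finally show ?thesis .
  qed
  have U2u: "mat_adjoint U2 * U2 = 1\<^sub>m n"
  proof (rule eq_matI)
    fix i j assume "i < dim_row (1\<^sub>m n)" "j < dim_col (1\<^sub>m n)"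
    then show "(mat_adjoint U2 * U2) $$ (i,j) = 1\<^sub>m n $$ (i,j)"
      by (subst adj_mult_index[OF U2 U2], auto simp: U2cip)
  qed (insert U2, auto)
  have AU2: "A' * U2 = U2 * dmat n d"
  proof (rule eq_matI)
    fix i j assume ij: "i < dim_row (U2 * dmat n d)" "j < dim_col (U2 * dmat n d)"
    then have i: "i < n" and j: "j < n" using U2 by auto
    have "(A' * U2) $$ (i,j) = (\<Sum>k\<in>{0..<Suc m}. A' $$ (i,k) * U2 $$ (k,j))"
      using i j A' U2 by (simp add: scalar_prod_def n_def)
    also have "\<dots> = A' $$ (i,0) * U2 $$ (0,j) + (\<Sum>k\<in>{0..<m}. A' $$ (i,Suc k) * U2 $$ (Suc k,j))"
      by (rule sum_Suc_shift)
    also have "\<dots> = U2 $$ (i,j) * complex_of_real (d j)"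
    proof (cases i)
      case 0
      have "(\<Sum>k\<in>{0..<m}. A' $$ (i,Suc k) * U2 $$ (Suc k,j)) = 0"
        using 0 A'row0 by (intro sum.neutral, auto simp: n_def)
      then show ?thesis using 0 A'col0 j ereal by (auto simp: U2_def d_def n_def)
    next
      case (Suc i')
      show ?thesis
      proof (cases j)
        case 0
        have "(\<Sum>k\<in>{0..<m}. A' $$ (i,Suc k) * U2 $$ (Suc k,j)) = 0"
          using 0 by (intro sum.neutral, auto simp: n_def U2_def)
        then show ?thesis using 0 Suc A'col0 i by (auto simp: U2_def d_def n_def)
      next
        case (Suc j')
        have "(\<Sum>k\<in>{0..<m}. A' $$ (i,Suc k) * U2 $$ (Suc k,j)) 
            = (\<Sum>k\<in>{0..<m}. H3 $$ (i',k) * U3 $$ (k,j'))"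
          using i j Suc \<open>i = Suc i'\<close> by (intro sum.cong, auto simp: U2_def n_def H3_def)
        also have "\<dots> = (H3 * U3) $$ (i',j')"
          using i j Suc \<open>i = Suc i'\<close> H3 U3c by (simp add: scalar_prod_def n_def)
        also have "\<dots> = U3 $$ (i',j') * complex_of_real (d3 j')"
          unfolding HU3 using i j Suc \<open>i = Suc i'\<close> U3c by (subst mult_dmat_index, auto simp: n_def)
        finally show ?thesis using i j Suc \<open>i = Suc i'\<close> A'col0 by (auto simp: U2_def d_def n_def)
      qed
    qed
    also have "\<dots> = (U2 * dmat n d) $$ (i,j)" by (rule mult_dmat_index[OF U2 i j, symmetric])
    finally show "(A' * U2) $$ (i,j) = (U2 * dmat n d) $$ (i,j)" .
  qed (insert A' U2, auto)
  define U where "U = U1 * U2"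
  have U: "U \<in> carrier_mat n n" using U1 U2 unfolding U_def by auto
  have HU1: "H * U1 = U1 * A'"
  proof -
    have "U1 * A' = (U1 * mat_adjoint U1) * (H * U1)" unfolding A'_def
      using U1 H by (simp add: assoc_mult_mat[of _ n n _ n _ n])
    also have "\<dots> = H * U1" using U1u' U1 H by simp
    finally show ?thesis by simp
  qed
  have HU: "H * U = U * dmat n d"
  proof -
    have "H * U = (H * U1) * U2" unfolding U_def using H U1 U2 by (simp add: assoc_mult_mat[of _ n n _ n _ n])
    also have "\<dots> = U1 * (A' * U2)" unfolding HU1 using A' U1 U2 by (simp add: assoc_mult_mat[of _ n n _ n _ n])
    also have "\<dots> = U * dmat n d" unfolding AU2 U_def using U1 U2 by (simp add: assoc_mult_mat[of _ n n _ n _ n])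
    finally show ?thesis .
  qed
  have Uu: "mat_adjoint U * U = 1\<^sub>m n"
  proof -
    have "mat_adjoint U * U = mat_adjoint U2 * ((mat_adjoint U1 * U1) * U2)"
      unfolding U_def adj_mult[OF U1 U2] using U1 U2 by (simp add: assoc_mult_mat[of _ n n _ n _ n])
    also have "\<dots> = 1\<^sub>m n" using U1u U2u U2 by simp
    finally show ?thesis .
  qed
  have Uu': "U * mat_adjoint U = 1\<^sub>m n"
    using mat_mult_left_right_inverse[OF _ U Uu] U by auto
  show ?case using U Uu Uu' HU unfolding unitary_def n_def by blast
qed


lemma dmat_mult_vec_dim: "dim_vec (dmat n d *\<^sub>v z) = n"
  by simp
lemma dmat_mult_vec_carrier[simp]: "dmat n d *\<^sub>v z \<in> carrier_vec n"
  using dmat_mult_vec_dim by (rule carrier_vecI)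

lemma unitary_col: assumes "unitary U n" "i < n" "j < n"
  shows "col U j \<bullet>c col U i = (if i = j then 1 else 0)"
proof -
  have U: "U \<in> carrier_mat n n" and u: "mat_adjoint U * U = 1\<^sub>m n" using assms unfolding unitary_def by auto
  have "(mat_adjoint U * U) $$ (i,j) = col U j \<bullet>c col U i" by (rule adj_mult_index[OF U U assms(2,3)])
  then show ?thesis using u assms by simp
qed

lemma unitary_col_nz: assumes "unitary U n" "i < n"
  shows "col U i \<noteq> 0\<^sub>v n"
proof
  assume "col U i = 0\<^sub>v n"
  then have "col U i \<bullet>c col U i = 0" by (simp add: cip_sum)
  then show False using unitary_col[OF assms assms(2)] by simp
qed

lemma eig_col: assumes "unitary U n" "H \<in> carrier_mat n n" "H * U = U * dmat n d" "i < n"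
  shows "H *\<^sub>v col U i = complex_of_real (d i) \<cdot>\<^sub>v col U i"
proof -
  have U: "U \<in> carrier_mat n n" using assms unfolding unitary_def by auto
  have "H *\<^sub>v col U i = col (H * U) i" using assms U by (intro col_mult2[symmetric], auto)
  also have "\<dots> = col (U * dmat n d) i" using assms(3) by simp
  also have "\<dots> = complex_of_real (d i) \<cdot>\<^sub>v col U i"
    by (rule eq_vecI, insert U assms, auto simp del: index_mult_mat(1) simp: mult_dmat_index[OF U] mult.commute)
  finally show ?thesis .
qed

lemma spec_decomp: assumes "unitary U n" "H \<in> carrier_mat n n" "H * U = U * dmat n d"
  shows "H = U * dmat n d * mat_adjoint U"
proof -
  have U: "U \<in> carrier_mat n n" and u: "U * mat_adjoint U = 1\<^sub>m n" using assms unfolding unitary_def by auto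
  have "H = H * (U * mat_adjoint U)" using u assms by simp
  also have "\<dots> = (H * U) * mat_adjoint U" by (rule assoc_mult_mat[symmetric, of _ n n _ n _ n], insert U assms, auto)
  finally show ?thesis using assms by simp
qed

lemma coord: assumes "unitary U n" "x \<in> carrier_vec n"
  shows "U *\<^sub>v (mat_adjoint U *\<^sub>v x) = x"
proof -
  have U: "U \<in> carrier_mat n n" and u: "U * mat_adjoint U = 1\<^sub>m n" using assms unfolding unitary_def by auto
  have "U *\<^sub>v (mat_adjoint U *\<^sub>v x) = (U * mat_adjoint U) *\<^sub>v x"
    by (rule assoc_mult_mat_vec[symmetric], insert U assms, auto)
  then show ?thesis using u assms by simp
qed

lemma coord_index: fixes U :: "complex mat" 
  assumes "U \<in> carrier_mat n n" "x \<in> carrier_vec n" "i < n"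
  shows "(mat_adjoint U *\<^sub>v x) $ i = x \<bullet>c col U i"
  using assms by (auto simp: scalar_prod_def mult.commute intro!: sum.cong)

lemma quad_form: assumes "unitary U n" "H \<in> carrier_mat n n" "H * U = U * dmat n d" "x \<in> carrier_vec n"
  defines "z \<equiv> mat_adjoint U *\<^sub>v x"
  shows "(vnorm x)\<^sup>2 = (\<Sum>i<n. (cmod (z $ i))\<^sup>2)"
    and "(H *\<^sub>v x) \<bullet>c x = complex_of_real (\<Sum>i<n. d i * (cmod (z $ i))\<^sup>2)"
proof -
  have U: "U \<in> carrier_mat n n" and u: "mat_adjoint U * U = 1\<^sub>m n" using assms unfolding unitary_def by auto
  have z: "z \<in> carrier_vec n" unfolding z_def by (rule mult_mat_vec_carrier[OF adj_carrier[OF U] assms(4)])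
  have UUz: "mat_adjoint U *\<^sub>v (U *\<^sub>v z) = (mat_adjoint U * U) *\<^sub>v z"
    by (rule assoc_mult_mat_vec[symmetric], insert U z, auto)
  have x: "x = U *\<^sub>v z" unfolding z_def using coord[OF assms(1,4)] by simp
  have "x \<bullet>c x = (U *\<^sub>v z) \<bullet>c (U *\<^sub>v z)" using x by simp
  also have "\<dots> = z \<bullet>c (mat_adjoint U *\<^sub>v (U *\<^sub>v z))" using U z by (intro adj_mult_vec, auto)
  also have "mat_adjoint U *\<^sub>v (U *\<^sub>v z) = z" using UUz u z by simp
  finally have "complex_of_real ((vnorm x)\<^sup>2) = complex_of_real ((vnorm z)\<^sup>2)" by (simp only: cip_self)
  then have "(vnorm x)\<^sup>2 = (vnorm z)\<^sup>2" by (simp only: of_real_eq_iff)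
  also have "(vnorm z)\<^sup>2 = (\<Sum>i<n. (cmod (z $ i))\<^sup>2)" using z unfolding vnorm_def 
    by (simp add: sum_nonneg)
  finally show "(vnorm x)\<^sup>2 = (\<Sum>i<n. (cmod (z $ i))\<^sup>2)" .
  have "H *\<^sub>v x = (H * U) *\<^sub>v z" unfolding x by (rule assoc_mult_mat_vec[symmetric], insert U z assms, auto)
  also have "\<dots> = U *\<^sub>v (dmat n d *\<^sub>v z)" unfolding assms(3) by (rule assoc_mult_mat_vec[OF U dmat_carrier z])
  finally have "H *\<^sub>v x = U *\<^sub>v (dmat n d *\<^sub>v z)" .
  then have "(H *\<^sub>v x) \<bullet>c x = (U *\<^sub>v (dmat n d *\<^sub>v z)) \<bullet>c (U *\<^sub>v z)" using x by simp
  also have "\<dots> = (dmat n d *\<^sub>v z) \<bullet>c (mat_adjoint U *\<^sub>v (U *\<^sub>v z))" using U z by (intro adj_mult_vec, auto)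
  also have "mat_adjoint U *\<^sub>v (U *\<^sub>v z) = z" using UUz u z by simp
  also have "(dmat n d *\<^sub>v z) \<bullet>c z = (\<Sum>i\<in>{0..<n}. complex_of_real (d i) * z $ i * cnj (z $ i))"
  proof -
    have "\<And>i. i < n \<Longrightarrow> (dmat n d *\<^sub>v z) $ i = complex_of_real (d i) * z $ i"
    proof -
      fix i assume i: "i < n"
      have "(dmat n d *\<^sub>v z) $ i = (\<Sum>k\<in>{0..<n}. (if i = k then complex_of_real (d i) else 0) * z $ k)"
        using i z by (simp add: scalar_prod_def)
      also have "\<dots> = (\<Sum>k\<in>{0..<n}. if k = i then complex_of_real (d i) * z $ k else 0)"
        by (rule sum.cong, auto)
      finally show "(dmat n d *\<^sub>v z) $ i = complex_of_real (d i) * z $ i" using i by simp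
    qed
    then show ?thesis using z by (simp add: cip_sum)
  qed
  also have "\<dots> = (\<Sum>i\<in>{0..<n}. complex_of_real (d i * (cmod (z $ i))\<^sup>2))"
    by (rule sum.cong, simp_all only: of_real_mult complex_norm_square mult.assoc)
  finally show "(H *\<^sub>v x) \<bullet>c x = complex_of_real (\<Sum>i<n. d i * (cmod (z $ i))\<^sup>2)"
    by (simp add: atLeast0LessThan)
qed


lemma cip_minus_left: fixes x y z :: "complex vec"
  assumes "dim_vec x = dim_vec z" "dim_vec y = dim_vec z"
  shows "(x - y) \<bullet>c z = x \<bullet>c z - y \<bullet>c z"
  using assms by (simp add: cip_sum algebra_simps sum_subtractf)

lemma cip_minus_right: fixes x y z :: "complex vec"
  assumes "dim_vec y = dim_vec x" "dim_vec z = dim_vec x"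
  shows "x \<bullet>c (y - z) = x \<bullet>c y - x \<bullet>c z"
  using assms by (simp add: cip_sum algebra_simps sum_subtractf)

lemma cip_add_left: fixes x y z :: "complex vec"
  assumes "dim_vec x = dim_vec z" "dim_vec y = dim_vec z"
  shows "(x + y) \<bullet>c z = x \<bullet>c z + y \<bullet>c z"
  using assms by (simp add: cip_sum algebra_simps sum.distrib)

lemma cip_add_right: fixes x y z :: "complex vec"
  assumes "dim_vec y = dim_vec x" "dim_vec z = dim_vec x"
  shows "x \<bullet>c (y + z) = x \<bullet>c y + x \<bullet>c z"
  using assms by (simp add: cip_sum algebra_simps sum.distrib)

lemma cip_smult_right: fixes x y :: "complex vec"
  assumes "dim_vec y = dim_vec x"
  shows "x \<bullet>c (a \<cdot>\<^sub>v y) = cnj a * (x \<bullet>c y)"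
  using assms by (simp add: cip_sum sum_distrib_left mult_ac)

lemma dmat_mult: "dmat n a * dmat n b = dmat n (\<lambda>i. a i * b i)"
  by (rule eq_matI, auto simp del: index_mult_mat(1) simp: mult_dmat_index[OF dmat_carrier])

lemma adj_dmat[simp]: "mat_adjoint (dmat n a) = dmat n a"
  by (rule eq_matI, auto)

lemma herm_zero: fixes X :: "complex mat"
  assumes X: "X \<in> carrier_mat n n" and h: "mat_adjoint X = X"
    and ev: "\<And>w \<mu>. w \<in> carrier_vec n \<Longrightarrow> w \<noteq> 0\<^sub>v n \<Longrightarrow> X *\<^sub>v w = complex_of_real \<mu> \<cdot>\<^sub>v w \<Longrightarrow> \<mu> = 0"
  shows "X = 0\<^sub>m n n"
proof -
  obtain V d where V: "unitary V n" and XV: "X * V = V * dmat n d" using spectral[OF X h] by blast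
  have Vc: "V \<in> carrier_mat n n" using V unfolding unitary_def by auto
  have "d i = 0" if "i < n" for i
    using ev[OF _ unitary_col_nz[OF V that] eig_col[OF V X XV that]] Vc that by auto
  then have "dmat n d = 0\<^sub>m n n" by (intro eq_matI, auto)
  then show ?thesis using spec_decomp[OF V X XV] Vc by simp
qed

definition hpd_spec :: "complex mat \<Rightarrow> complex mat \<Rightarrow> bool" where
 "hpd_spec D S \<longleftrightarrow> S \<in> carrier_mat (dim_row D) (dim_row D) \<and> mat_adjoint S = S \<and>
      (\<forall>v \<in> carrier_vec (dim_row D). v \<noteq> 0\<^sub>v (dim_row D) \<longrightarrow> 0 < Re (v \<bullet>c (S *\<^sub>v v))) \<and> S * S = D"

lemma hpd_sqrt_THE: "hpd_sqrt D = (THE S. hpd_spec D S)"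
  unfolding hpd_sqrt_def hpd_spec_def by simp

lemma hpd_unique: assumes S1: "hpd_spec D S1" and S2: "hpd_spec D S2" shows "S1 = S2"
proof -
  define n where "n = dim_row D"
  have c1: "S1 \<in> carrier_mat n n" and h1: "mat_adjoint S1 = S1" and p1: "\<And>v. v \<in> carrier_vec n \<Longrightarrow> v \<noteq> 0\<^sub>v n \<Longrightarrow> 0 < Re (v \<bullet>c (S1 *\<^sub>v v))"
    and q1: "S1 * S1 = D" using S1 unfolding hpd_spec_def n_def by auto
  have c2: "S2 \<in> carrier_mat n n" and h2: "mat_adjoint S2 = S2" and p2: "\<And>v. v \<in> carrier_vec n \<Longrightarrow> v \<noteq> 0\<^sub>v n \<Longrightarrow> 0 < Re (v \<bullet>c (S2 *\<^sub>v v))"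
    and q2: "S2 * S2 = D" using S2 unfolding hpd_spec_def n_def by auto
  define X where "X = S1 - S2"
  have X: "X \<in> carrier_mat n n" using c1 c2 unfolding X_def by auto
  have hX: "mat_adjoint X = X" unfolding X_def using c1 c2 h1 h2 by (simp add: adj_minus)
  have "X = 0\<^sub>m n n"
  proof (rule herm_zero[OF X hX])
    fix w \<mu> assume w: "w \<in> carrier_vec n" and w0: "w \<noteq> 0\<^sub>v n" and Xw: "X *\<^sub>v w = complex_of_real \<mu> \<cdot>\<^sub>v w"
    define a where "a = S1 *\<^sub>v w"
    define b where "b = S2 *\<^sub>v w"
    have a: "a \<in> carrier_vec n" and b: "b \<in> carrier_vec n" unfolding a_def b_def using c1 c2 w by auto
    have ab: "a - b = complex_of_real \<mu> \<cdot>\<^sub>v w" unfolding a_def b_def using Xw c1 c2 w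
      unfolding X_def by (simp add: minus_mult_distrib_mat_vec)
    have aa: "a \<bullet>c a = w \<bullet>c (D *\<^sub>v w)"
    proof -
      have "a \<bullet>c a = w \<bullet>c (mat_adjoint S1 *\<^sub>v (S1 *\<^sub>v w))" unfolding a_def by (rule adj_mult_vec[OF c1 w], insert c1 w, auto)
      also have "mat_adjoint S1 *\<^sub>v (S1 *\<^sub>v w) = D *\<^sub>v w" unfolding h1 q1[symmetric]
        by (rule assoc_mult_mat_vec[symmetric, OF c1 c1 w])
      finally show ?thesis .
    qed
    have bb: "b \<bullet>c b = w \<bullet>c (D *\<^sub>v w)"
    proof -
      have "b \<bullet>c b = w \<bullet>c (mat_adjoint S2 *\<^sub>v (S2 *\<^sub>v w))" unfolding b_def by (rule adj_mult_vec[OF c2 w], insert c2 w, auto)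
      also have "mat_adjoint S2 *\<^sub>v (S2 *\<^sub>v w) = D *\<^sub>v w" unfolding h2 q2[symmetric]
        by (rule assoc_mult_mat_vec[symmetric, OF c2 c2 w])
      finally show ?thesis .
    qed
    have e1: "complex_of_real \<mu> * (a \<bullet>c w) = a \<bullet>c a - a \<bullet>c b"
    proof -
      have "a \<bullet>c (a - b) = a \<bullet>c a - a \<bullet>c b" using a b by (intro cip_minus_right, auto)
      moreover have "a \<bullet>c (a - b) = complex_of_real \<mu> * (a \<bullet>c w)" unfolding ab using a w 
        by (subst cip_smult_right, auto)
      ultimately show ?thesis by simp
    qed
    have e2: "complex_of_real \<mu> * (w \<bullet>c b) = a \<bullet>c b - b \<bullet>c b"
    proof -
      have "(a - b) \<bullet>c b = a \<bullet>c b - b \<bullet>c b" using a b by (intro cip_minus_left, auto)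
      moreover have "(a - b) \<bullet>c b = complex_of_real \<mu> * (w \<bullet>c b)" unfolding ab using b w 
        by (subst cip_smult_left, auto)
      ultimately show ?thesis by simp
    qed
    have "complex_of_real \<mu> * (a \<bullet>c w + w \<bullet>c b) = (a \<bullet>c a - a \<bullet>c b) + (a \<bullet>c b - b \<bullet>c b)"
      by (simp only: e1[symmetric] e2[symmetric] distrib_left)
    also have "\<dots> = a \<bullet>c a - b \<bullet>c b" by simp
    also have "\<dots> = 0" using aa bb by simp
    finally have "complex_of_real \<mu> * (a \<bullet>c w + w \<bullet>c b) = 0" .
    then have "Re (complex_of_real \<mu> * (a \<bullet>c w + w \<bullet>c b)) = 0" by (metis zero_complex.sel(1))
    moreover have "Re (complex_of_real \<mu> * (a \<bullet>c w + w \<bullet>c b)) = \<mu> * Re (a \<bullet>c w + w \<bullet>c b)" by simp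
    moreover have "Re (a \<bullet>c w + w \<bullet>c b) = Re (a \<bullet>c w) + Re (w \<bullet>c b)" by simp
    ultimately have "\<mu> * (Re (a \<bullet>c w) + Re (w \<bullet>c b)) = 0" by simp
    moreover have "Re (a \<bullet>c w) > 0"
    proof -
      have "a \<bullet>c w = cnj (w \<bullet>c a)" using a w by (intro cip_comm, auto)
      then show ?thesis using p1[OF w w0] unfolding a_def by simp
    qed
    moreover have "Re (w \<bullet>c b) > 0" using p2[OF w w0] unfolding b_def by simp
    ultimately show "\<mu> = 0" by simp
  qed
  note X0 = this
  show ?thesis
  proof (rule eq_matI)
    fix i j assume ij: "i < dim_row S2" "j < dim_col S2"
    then have "X $$ (i,j) = 0" using X0 c2 by simp
    then show "S1 $$ (i,j) = S2 $$ (i,j)" using ij c1 c2 unfolding X_def by simp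
  qed (insert c1 c2, auto)
qed

lemma sum_pos_weighted: fixes w c :: "nat \<Rightarrow> real"
  assumes "\<And>i. i < n \<Longrightarrow> w i > 0" "\<And>i. i < n \<Longrightarrow> c i \<ge> 0" "(\<Sum>i<n. c i) > 0"
  shows "(\<Sum>i<n. w i * c i) > 0"
proof -
  obtain i where i: "i < n" "c i > 0"
  proof (rule ccontr)
    assume "\<not> thesis"
    then have "\<forall>i<n. c i \<le> 0" using that by force
    then have "(\<Sum>i<n. c i) \<le> 0" by (intro sum_nonpos, auto)
    then show False using assms(3) by simp
  qed
  have "(\<Sum>j<n. w j * c j) = w i * c i + (\<Sum>j\<in>{..<n}-{i}. w j * c j)"
    by (rule sum.remove, insert i, auto)
  moreover have "(\<Sum>j\<in>{..<n}-{i}. w j * c j) \<ge> 0"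
  proof (rule sum_nonneg)
    fix j assume "j \<in> {..<n} - {i}"
    then have "w j \<ge> 0" "c j \<ge> 0" using assms(1,2) by (auto simp: less_imp_le)
    then show "w j * c j \<ge> 0" by simp
  qed
  moreover have "w i * c i > 0" using i assms by simp
  ultimately show ?thesis by linarith
qed

lemma hpd_exists: fixes D :: "complex mat"
  assumes D: "D \<in> carrier_mat n n" and h: "mat_adjoint D = D"
    and pd: "\<And>v. v \<in> carrier_vec n \<Longrightarrow> v \<noteq> 0\<^sub>v n \<Longrightarrow> 0 < Re (v \<bullet>c (D *\<^sub>v v))"
  shows "\<exists>S. hpd_spec D S"
proof -
  obtain U d where U: "unitary U n" and DU: "D * U = U * dmat n d" using spectral[OF D h] by blast
  have Uc: "U \<in> carrier_mat n n" and Uu: "mat_adjoint U * U = 1\<^sub>m n" using U unfolding unitary_def by auto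
  have dpos: "d i > 0" if i: "i < n" for i
  proof -
    let ?u = "col U i"
    have u: "?u \<in> carrier_vec n" using Uc i by auto
    have "?u \<bullet>c (D *\<^sub>v ?u) = cnj (complex_of_real (d i)) * (?u \<bullet>c ?u)"
      unfolding eig_col[OF U D DU i] using u by (subst cip_smult_right, auto)
    also have "\<dots> = complex_of_real (d i)" using unitary_col[OF U i i] by simp
    finally show ?thesis using pd[OF u unitary_col_nz[OF U i]] by simp
  qed
  define e where "e i = sqrt (d i)" for i
  define S where "S = U * dmat n e * mat_adjoint U"
  have S: "S \<in> carrier_mat n n" unfolding S_def using Uc by auto
  have aU: "mat_adjoint U \<in> carrier_mat n n" using Uc by auto
  have De: "dmat n e \<in> carrier_mat n n" by simp
  have UDe: "U * dmat n e \<in> carrier_mat n n" using Uc by auto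
  have SU: "S * U = U * dmat n e"
  proof -
    have "S * U = (U * dmat n e) * (mat_adjoint U * U)" unfolding S_def 
      by (rule assoc_mult_mat[OF UDe aU Uc])
    then show ?thesis using Uu UDe by simp
  qed
  have hS: "mat_adjoint S = S"
  proof -
    have "mat_adjoint S = mat_adjoint (mat_adjoint U) * mat_adjoint (U * dmat n e)"
      unfolding S_def by (rule adj_mult[OF UDe aU])
    also have "\<dots> = U * (dmat n e * mat_adjoint U)" by (simp add: adj_mult[OF Uc De])
    also have "\<dots> = S" unfolding S_def by (rule assoc_mult_mat[symmetric, OF Uc De aU])
    finally show ?thesis .
  qed
  have dd: "dmat n e * dmat n e = dmat n d" unfolding dmat_mult e_def
    using dpos by (intro eq_matI, auto simp: less_imp_le)
  have SS: "S * S = D"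
  proof -
    have "S * S = (S * (U * dmat n e)) * mat_adjoint U" unfolding S_def[of ] 
      by (rule assoc_mult_mat[symmetric, OF S UDe aU, unfolded S_def])
    also have "S * (U * dmat n e) = U * (dmat n e * dmat n e)"
      using assoc_mult_mat[symmetric, OF S Uc De] SU assoc_mult_mat[OF Uc De De] by simp
    also have "U * (dmat n e * dmat n e) * mat_adjoint U = D" unfolding dd using spec_decomp[OF U D DU] by simp
    finally show ?thesis .
  qed
  have pS: "0 < Re (v \<bullet>c (S *\<^sub>v v))" if v: "v \<in> carrier_vec n" "v \<noteq> 0\<^sub>v n" for v
  proof -
    define z where "z = mat_adjoint U *\<^sub>v v"
    note q = quad_form[OF U S SU v(1), folded z_def]
    have "v \<bullet>c (S *\<^sub>v v) = cnj ((S *\<^sub>v v) \<bullet>c v)" using v S by (intro cip_comm, auto)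
    then have "Re (v \<bullet>c (S *\<^sub>v v)) = (\<Sum>i<n. e i * (cmod (z $ i))\<^sup>2)" using q(2) by simp
    also have "\<dots> > 0"
    proof (rule sum_pos_weighted)
      have "vnorm v \<noteq> 0" using v vnorm_zero_iff[of v] by auto
      then have "(vnorm v)\<^sup>2 > 0" using vnorm_nonneg[of v] by simp
      then show "(\<Sum>i<n. (cmod (z $ i))\<^sup>2) > 0" using q(1) by simp
    qed (auto simp: e_def dpos)
    finally show ?thesis .
  qed
  show ?thesis unfolding hpd_spec_def using S hS SS pS D by (intro exI[of _ S], auto)
qed

lemma hpd_sqrt_spec: fixes D :: "complex mat"
  assumes D: "D \<in> carrier_mat n n" and h: "mat_adjoint D = D"
    and pd: "\<And>v. v \<in> carrier_vec n \<Longrightarrow> v \<noteq> 0\<^sub>v n \<Longrightarrow> 0 < Re (v \<bullet>c (D *\<^sub>v v))"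
  shows "hpd_spec D (hpd_sqrt D)"
proof -
  have "\<exists>!S. hpd_spec D S" using hpd_exists[OF assms] hpd_unique by blast
  then show ?thesis unfolding hpd_sqrt_THE by (rule theI')
qed


lemma cip_expand: fixes x y :: "complex vec"
  assumes "x \<in> carrier_vec n" "y \<in> carrier_vec n"
  shows "(x - y) \<bullet>c (x - y) = x \<bullet>c x - x \<bullet>c y - y \<bullet>c x + y \<bullet>c y"
proof -
  have "(x - y) \<bullet>c (x - y) = x \<bullet>c (x - y) - y \<bullet>c (x - y)" using assms by (intro cip_minus_left, auto)
  also have "\<dots> = (x \<bullet>c x - x \<bullet>c y) - (y \<bullet>c x - y \<bullet>c y)" using assms
    by (subst cip_minus_right, auto, subst cip_minus_right, auto)
  finally show ?thesis by simp
qed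

lemma cip_zero_right[simp]: "x \<in> carrier_vec n \<Longrightarrow> x \<bullet>c 0\<^sub>v n = 0"
  by (simp add: cip_sum)

lemma cip_zero_left[simp]: "x \<in> carrier_vec n \<Longrightarrow> 0\<^sub>v n \<bullet>c x = 0"
  by (simp add: cip_sum)

lemma cip_gram: fixes B :: "complex mat"
  assumes B: "B \<in> carrier_mat r c" and w: "w \<in> carrier_vec r"
  shows "w \<bullet>c (B *\<^sub>v (mat_adjoint B *\<^sub>v w)) = complex_of_real ((vnorm (mat_adjoint B *\<^sub>v w))\<^sup>2)"
proof -
  have aB: "mat_adjoint B \<in> carrier_mat c r" using B by auto
  have "w \<bullet>c (B *\<^sub>v (mat_adjoint B *\<^sub>v w)) = cnj ((B *\<^sub>v (mat_adjoint B *\<^sub>v w)) \<bullet>c w)"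
    using B w by (intro cip_comm, auto)
  also have "(B *\<^sub>v (mat_adjoint B *\<^sub>v w)) \<bullet>c w = (mat_adjoint B *\<^sub>v w) \<bullet>c (mat_adjoint B *\<^sub>v w)"
    using adj_mult_vec[OF B _ w, of "mat_adjoint B *\<^sub>v w"] aB w by auto
  finally show ?thesis by (simp add: cip_self)
qed

locale setting =
  fixes A :: "complex mat" and bl :: "nat \<Rightarrow> nat" and N n :: nat and \<gamma> :: real
  assumes A: "A \<in> carrier_mat N n" and gpos: "\<gamma> > 0"
begin

definition "G = A * mat_adjoint A"
definition "Dg g = mat N N (\<lambda>(a,b). if bl a = bl b then (if a = b then complex_of_real g else 0) + G $$ (a,b) else 0)"
definition "Lg = mat N N (\<lambda>(a,b). if bl a > bl b then G $$ (a,b) else 0)"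
definition "K = Dg \<gamma> + Lg"

lemma aA: "mat_adjoint A \<in> carrier_mat n N" using A by auto
lemma Gc: "G \<in> carrier_mat N N" unfolding G_def using A by auto
lemma Gh: "mat_adjoint G = G" unfolding G_def using adj_mult[OF A aA] by simp
lemma Gsym: assumes "a < N" "b < N" shows "G $$ (b,a) = cnj (G $$ (a,b))"
proof -
  have "mat_adjoint G $$ (a,b) = cnj (G $$ (b,a))" using Gc assms by simp
  then show ?thesis using Gh by simp
qed
lemma Ddim[simp]: "dim_row (Dg g) = N" "dim_col (Dg g) = N" unfolding Dg_def by auto
lemma Dc: "Dg g \<in> carrier_mat N N" unfolding Dg_def by simp
lemma Lc: "Lg \<in> carrier_mat N N" unfolding Lg_def by simp
lemma Kc: "K \<in> carrier_mat N N" unfolding K_def using Dc Lc by auto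

lemma KK: "K + mat_adjoint K - G = Dg (2 * \<gamma>)"
proof (rule eq_matI)
  fix a b assume ab: "a < dim_row (Dg (2 * \<gamma>))" "b < dim_col (Dg (2 * \<gamma>))"
  then have a: "a < N" and b: "b < N" by (simp_all add: Dg_def)
  note g = Gsym[OF a b]
  show "(K + mat_adjoint K - G) $$ (a,b) = Dg (2 * \<gamma>) $$ (a,b)"
    using a b Kc Gc Dc Lc unfolding K_def by (auto simp: Dg_def Lg_def g)
qed (insert Kc Gc Dc, auto)

lemma Dh: "mat_adjoint (Dg g) = Dg g"
proof (rule eq_matI)
  fix a b assume ab: "a < dim_row (Dg g)" "b < dim_col (Dg g)"
  then have a: "a < N" and b: "b < N" by (simp_all add: Dg_def)
  note gg = Gsym[OF a b]
  show "mat_adjoint (Dg g) $$ (a,b) = Dg g $$ (a,b)"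
    using a b Dc by (auto simp: Dg_def gg)
qed (insert Dc, auto)

definition "Pv v = vec N (\<lambda>a. \<Sum>b\<in>{0..<N}. if bl a = bl b then G $$ (a,b) * v $ b else 0)"

lemma Pv_c: "Pv v \<in> carrier_vec N" unfolding Pv_def by simp
lemma Pv_dim[simp]: "dim_vec (Pv v) = N" unfolding Pv_def by simp

lemma Dmult: assumes v: "v \<in> carrier_vec N"
  shows "Dg g *\<^sub>v v = complex_of_real g \<cdot>\<^sub>v v + Pv v"
proof (rule eq_vecI)
  fix a assume "a < dim_vec (complex_of_real g \<cdot>\<^sub>v v + Pv v)"
  then have a: "a < N" using Pv_c by simp
  have "(Dg g *\<^sub>v v) $ a = (\<Sum>b\<in>{0..<N}. (if bl a = bl b then ((if a = b then complex_of_real g else 0) + G $$ (a,b)) * v $ b else 0))"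
    using a v by (auto simp: Dg_def scalar_prod_def intro!: sum.cong)
  also have "\<dots> = (\<Sum>b\<in>{0..<N}. (if a = b then complex_of_real g * v $ b else 0) + (if bl a = bl b then G $$ (a,b) * v $ b else 0))"
    by (rule sum.cong, auto simp: algebra_simps)
  also have "\<dots> = complex_of_real g * v $ a + (\<Sum>b\<in>{0..<N}. if bl a = bl b then G $$ (a,b) * v $ b else 0)"
    using a by (simp add: sum.distrib)
  also have "\<dots> = (complex_of_real g \<cdot>\<^sub>v v + Pv v) $ a" using a v by (simp add: Pv_def)
  finally show "(Dg g *\<^sub>v v) $ a = (complex_of_real g \<cdot>\<^sub>v v + Pv v) $ a" .
qed (insert Pv_c, auto)

lemma Gv: "w \<in> carrier_vec N \<Longrightarrow> G *\<^sub>v w = A *\<^sub>v (mat_adjoint A *\<^sub>v w)"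
  unfolding G_def by (rule assoc_mult_mat_vec[OF A aA])

lemma G_nonneg: assumes w: "w \<in> carrier_vec N" shows "w \<bullet>c (G *\<^sub>v w) = complex_of_real ((vnorm (mat_adjoint A *\<^sub>v w))\<^sup>2)"
  unfolding Gv[OF w] by (rule cip_gram[OF A w])

lemma Pv_nonneg: assumes v: "v \<in> carrier_vec N" shows "Re (v \<bullet>c Pv v) \<ge> 0"
proof -
  define C where "C = bl ` {0..<N}"
  define W where "W c = vec N (\<lambda>a. if bl a = c then v $ a else 0)" for c
  have Wc: "W c \<in> carrier_vec N" for c unfolding W_def by simp
  define F where "F a c = v $ a * cnj (\<Sum>b\<in>{0..<N}. if bl b = c then G $$ (a,b) * v $ b else 0)" for a c
  have "(\<Sum>c\<in>C. W c \<bullet>c (G *\<^sub>v W c)) = (\<Sum>c\<in>C. \<Sum>a\<in>{0..<N}. if c = bl a then F a c else 0)"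
  proof (rule sum.cong[OF refl])
    fix c assume "c \<in> C"
    have "W c \<bullet>c (G *\<^sub>v W c) = (\<Sum>a\<in>{0..<N}. W c $ a * cnj ((G *\<^sub>v W c) $ a))"
      using Gc by (simp add: cip_sum)
    also have "\<dots> = (\<Sum>a\<in>{0..<N}. if c = bl a then F a c else 0)"
    proof (rule sum.cong[OF refl])
      fix a assume a: "a \<in> {0..<N}"
      have "(G *\<^sub>v W c) $ a = (\<Sum>b\<in>{0..<N}. if bl b = c then G $$ (a,b) * v $ b else 0)"
        using a Gc by (auto simp: scalar_prod_def W_def intro!: sum.cong)
      then show "W c $ a * cnj ((G *\<^sub>v W c) $ a) = (if c = bl a then F a c else 0)"
        using a by (auto simp: W_def F_def)
    qed
    finally show "W c \<bullet>c (G *\<^sub>v W c) = (\<Sum>a\<in>{0..<N}. if c = bl a then F a c else 0)" .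
  qed
  also have "\<dots> = (\<Sum>a\<in>{0..<N}. \<Sum>c\<in>C. if c = bl a then F a c else 0)" by (rule sum.swap)
  also have "\<dots> = (\<Sum>a\<in>{0..<N}. F a (bl a))"
    by (rule sum.cong[OF refl], simp add: C_def)
  also have "\<dots> = v \<bullet>c Pv v"
    using v by (auto simp: cip_sum Pv_def F_def intro!: sum.cong arg_cong[where f = cnj])
  finally have eq: "v \<bullet>c Pv v = (\<Sum>c\<in>C. W c \<bullet>c (G *\<^sub>v W c))" by simp
  have "Re (v \<bullet>c Pv v) = (\<Sum>c\<in>C. (vnorm (mat_adjoint A *\<^sub>v W c))\<^sup>2)"
    unfolding eq by (simp add: G_nonneg[OF Wc])
  also have "\<dots> \<ge> 0" by (rule sum_nonneg, simp)
  finally show ?thesis .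
qed

lemma D_pd: assumes v: "v \<in> carrier_vec N" shows "Re (v \<bullet>c (Dg g *\<^sub>v v)) \<ge> g * (vnorm v)\<^sup>2"
proof -
  have "v \<bullet>c (Dg g *\<^sub>v v) = v \<bullet>c (complex_of_real g \<cdot>\<^sub>v v) + v \<bullet>c Pv v"
    unfolding Dmult[OF v] using v Pv_c by (intro cip_add_right, auto)
  also have "v \<bullet>c (complex_of_real g \<cdot>\<^sub>v v) = complex_of_real (g * (vnorm v)\<^sup>2)"
    using v by (subst cip_smult_right, auto simp: cip_self)
  finally show ?thesis using Pv_nonneg[OF v] by simp
qed

lemma vnorm_pos: "v \<in> carrier_vec N \<Longrightarrow> v \<noteq> 0\<^sub>v N \<Longrightarrow> (vnorm v)\<^sup>2 > 0"
  using vnorm_zero_iff[of v] vnorm_nonneg[of v] by auto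

lemma D2_pd: "v \<in> carrier_vec N \<Longrightarrow> v \<noteq> 0\<^sub>v N \<Longrightarrow> 0 < Re (v \<bullet>c (Dg (2 * \<gamma>) *\<^sub>v v))"
  using D_pd[of v "2 * \<gamma>"] vnorm_pos[of v] gpos
  by (smt (verit, best) mult_pos_pos)

lemma D2_decomp: assumes v: "v \<in> carrier_vec N"
  shows "Dg (2 * \<gamma>) *\<^sub>v v = K *\<^sub>v v + mat_adjoint K *\<^sub>v v - G *\<^sub>v v"
proof -
  have aK: "mat_adjoint K \<in> carrier_mat N N" using Kc by auto
  have "Dg (2 * \<gamma>) *\<^sub>v v = (K + mat_adjoint K - G) *\<^sub>v v" unfolding KK ..
  also have "\<dots> = (K + mat_adjoint K) *\<^sub>v v - G *\<^sub>v v" 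
    by (rule minus_mult_distrib_mat_vec, insert Kc aK Gc v, auto)
  also have "(K + mat_adjoint K) *\<^sub>v v = K *\<^sub>v v + mat_adjoint K *\<^sub>v v"
    by (rule add_mult_distrib_mat_vec, insert Kc aK v, auto)
  finally show ?thesis .
qed

lemma K_inj: assumes v: "v \<in> carrier_vec N" and Kv: "K *\<^sub>v v = 0\<^sub>v N" shows "v = 0\<^sub>v N"
proof (rule ccontr)
  assume v0: "v \<noteq> 0\<^sub>v N"
  have aK: "mat_adjoint K \<in> carrier_mat N N" using Kc by auto
  have "v \<bullet>c (Dg (2 * \<gamma>) *\<^sub>v v) = v \<bullet>c (K *\<^sub>v v + mat_adjoint K *\<^sub>v v) - v \<bullet>c (G *\<^sub>v v)"
    unfolding D2_decomp[OF v] using v Kc aK Gc by (intro cip_minus_right, auto)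
  also have "v \<bullet>c (K *\<^sub>v v + mat_adjoint K *\<^sub>v v) = v \<bullet>c (K *\<^sub>v v) + v \<bullet>c (mat_adjoint K *\<^sub>v v)"
    using v Kc aK by (intro cip_add_right, auto)
  also have "v \<bullet>c (mat_adjoint K *\<^sub>v v) = (K *\<^sub>v v) \<bullet>c v" using adj_mult_vec[OF Kc v v] by simp
  finally have "v \<bullet>c (Dg (2 * \<gamma>) *\<^sub>v v) = - (v \<bullet>c (G *\<^sub>v v))" unfolding Kv using v by simp
  then have "Re (v \<bullet>c (Dg (2 * \<gamma>) *\<^sub>v v)) = - (vnorm (mat_adjoint A *\<^sub>v v))\<^sup>2"
    using G_nonneg[OF v] by simp
  then show False using D2_pd[OF v v0] by (smt (verit) zero_le_power2)
qed

lemma K_inv: "\<exists>M'. mat_inverse K = Some M'"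
proof -
  have "det K \<noteq> 0" using K_inj det_0_iff_vec_prod_zero[OF Kc] by auto
  then have U: "K \<in> Units (ring_mat TYPE(complex) N ())" by (rule det_non_zero_imp_unit[OF Kc])
  show ?thesis
  proof (cases "mat_inverse K")
    case None
    then have "K \<notin> Units (ring_mat TYPE(complex) N ())" by (rule mat_inverse(1)[OF Kc])
    with U show ?thesis by simp
  qed auto
qed

definition "M = the (mat_inverse K)"
definition "S = hpd_sqrt (Dg (2 * \<gamma>))"
definition "R = S * M * A"
definition "T = 1\<^sub>m n - mat_adjoint A * M * A"

lemma M_props: "M \<in> carrier_mat N N" "K * M = 1\<^sub>m N" "M * K = 1\<^sub>m N"
proof -
  obtain M' where "mat_inverse K = Some M'" using K_inv by blast
  then have "M = M'" and "K * M' = 1\<^sub>m N \<and> M' * K = 1\<^sub>m N \<and> M' \<in> carrier_mat N N" 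
    using mat_inverse(2)[OF Kc] unfolding M_def by auto
  then show "M \<in> carrier_mat N N" "K * M = 1\<^sub>m N" "M * K = 1\<^sub>m N" by auto
qed

lemma Mc: "M \<in> carrier_mat N N" by (rule M_props(1))

lemma S_props: "S \<in> carrier_mat N N" "mat_adjoint S = S" "S * S = Dg (2 * \<gamma>)"
  "\<And>v. v \<in> carrier_vec N \<Longrightarrow> v \<noteq> 0\<^sub>v N \<Longrightarrow> 0 < Re (v \<bullet>c (S *\<^sub>v v))"
  using hpd_sqrt_spec[OF Dc Dh D2_pd] unfolding S_def[symmetric] hpd_spec_def by auto

lemma Sc: "S \<in> carrier_mat N N" by (rule S_props(1))

lemma Rc: "R \<in> carrier_mat N n" unfolding R_def using Sc Mc A by auto
lemma Tc: "T \<in> carrier_mat n n" unfolding T_def using Mc A aA by auto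

lemma SMc: "S * M \<in> carrier_mat N N" using Sc Mc by auto
lemma aAM: "mat_adjoint A * M \<in> carrier_mat n N" using aA Mc by auto
lemma aAMA: "mat_adjoint A * M * A \<in> carrier_mat n n" using aAM A by auto

lemma T_apply: assumes x: "x \<in> carrier_vec n"
  shows "T *\<^sub>v x = x - mat_adjoint A *\<^sub>v (M *\<^sub>v (A *\<^sub>v x))"
proof -
  have "T *\<^sub>v x = 1\<^sub>m n *\<^sub>v x - (mat_adjoint A * M * A) *\<^sub>v x" unfolding T_def
    by (rule minus_mult_distrib_mat_vec, insert aAMA x, auto)
  also have "(mat_adjoint A * M * A) *\<^sub>v x = (mat_adjoint A * M) *\<^sub>v (A *\<^sub>v x)"
    by (rule assoc_mult_mat_vec[OF aAM A x])
  also have "\<dots> = mat_adjoint A *\<^sub>v (M *\<^sub>v (A *\<^sub>v x))"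
    by (rule assoc_mult_mat_vec[OF aA Mc], insert A x, auto)
  finally show ?thesis using x by simp
qed

lemma R_apply: assumes x: "x \<in> carrier_vec n"
  shows "R *\<^sub>v x = S *\<^sub>v (M *\<^sub>v (A *\<^sub>v x))"
proof -
  have "R *\<^sub>v x = (S * M) *\<^sub>v (A *\<^sub>v x)" unfolding R_def by (rule assoc_mult_mat_vec[OF SMc A x])
  also have "\<dots> = S *\<^sub>v (M *\<^sub>v (A *\<^sub>v x))" by (rule assoc_mult_mat_vec[OF Sc Mc], insert A x, auto)
  finally show ?thesis .
qed

lemma KMv: assumes v: "v \<in> carrier_vec N" shows "K *\<^sub>v (M *\<^sub>v v) = v"
proof -
  have "K *\<^sub>v (M *\<^sub>v v) = (K * M) *\<^sub>v v" by (rule assoc_mult_mat_vec[symmetric, OF Kc Mc v])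
  then show ?thesis using M_props(2) v by simp
qed

lemma Tx: assumes x: "x \<in> carrier_vec n"
  shows "(vnorm (T *\<^sub>v x))\<^sup>2 = (vnorm x)\<^sup>2 - (vnorm (R *\<^sub>v x))\<^sup>2"
proof -
  define z where "z = M *\<^sub>v (A *\<^sub>v x)"
  have z: "z \<in> carrier_vec N" unfolding z_def using Mc A x by auto
  define y where "y = mat_adjoint A *\<^sub>v z"
  have y: "y \<in> carrier_vec n" unfolding y_def using aA z by auto
  have aK: "mat_adjoint K \<in> carrier_mat N N" using Kc by auto
  have Ax: "A *\<^sub>v x = K *\<^sub>v z" unfolding z_def using KMv A x by auto
  have Tx: "T *\<^sub>v x = x - y" unfolding y_def z_def by (rule T_apply[OF x])
  have Rx: "R *\<^sub>v x = S *\<^sub>v z" unfolding z_def by (rule R_apply[OF x])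
  define q where "q = z \<bullet>c (K *\<^sub>v z)"
  define g where "g = z \<bullet>c (G *\<^sub>v z)"
  have yx: "y \<bullet>c x = q" unfolding y_def q_def Ax[symmetric] using adj_mult_vec[OF aA z x] by simp
  have xy: "x \<bullet>c y = cnj q" using x y yx by (subst cip_comm, auto)
  have yy: "y \<bullet>c y = g" unfolding g_def Gv[OF z] y_def using adj_mult_vec[OF aA z, of "mat_adjoint A *\<^sub>v z"] aA z by simp
  have Sz: "(S *\<^sub>v z) \<bullet>c (S *\<^sub>v z) = q + cnj q - g"
  proof -
    have "(S *\<^sub>v z) \<bullet>c (S *\<^sub>v z) = z \<bullet>c (mat_adjoint S *\<^sub>v (S *\<^sub>v z))"
      by (rule adj_mult_vec[OF Sc z], insert Sc z, auto)
    also have "mat_adjoint S *\<^sub>v (S *\<^sub>v z) = Dg (2 * \<gamma>) *\<^sub>v z"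
      unfolding S_props(2) S_props(3)[symmetric] by (rule assoc_mult_mat_vec[symmetric, OF Sc Sc z])
    also have "Dg (2 * \<gamma>) *\<^sub>v z = K *\<^sub>v z + mat_adjoint K *\<^sub>v z - G *\<^sub>v z" by (rule D2_decomp[OF z])
    also have "z \<bullet>c \<dots> = z \<bullet>c (K *\<^sub>v z + mat_adjoint K *\<^sub>v z) - z \<bullet>c (G *\<^sub>v z)"
      using z Kc aK Gc by (intro cip_minus_right, auto)
    also have "z \<bullet>c (K *\<^sub>v z + mat_adjoint K *\<^sub>v z) = z \<bullet>c (K *\<^sub>v z) + z \<bullet>c (mat_adjoint K *\<^sub>v z)"
      using z Kc aK by (intro cip_add_right, auto)
    also have "z \<bullet>c (mat_adjoint K *\<^sub>v z) = (K *\<^sub>v z) \<bullet>c z" using adj_mult_vec[OF Kc z z] by simp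
    also have "(K *\<^sub>v z) \<bullet>c z = cnj q" unfolding q_def using Kc z by (subst cip_comm, auto)
    finally show ?thesis unfolding q_def g_def by simp
  qed
  have "(T *\<^sub>v x) \<bullet>c (T *\<^sub>v x) = x \<bullet>c x - (S *\<^sub>v z) \<bullet>c (S *\<^sub>v z)"
    unfolding Tx cip_expand[OF x y] xy yx yy Sz by simp
  then have "complex_of_real ((vnorm (T *\<^sub>v x))\<^sup>2) = complex_of_real ((vnorm x)\<^sup>2 - (vnorm (R *\<^sub>v x))\<^sup>2)"
    unfolding Rx cip_self by simp
  then show ?thesis by (simp only: of_real_eq_iff)
qed

lemma Rx0: assumes x: "x \<in> carrier_vec n" and R0: "R *\<^sub>v x = 0\<^sub>v N" shows "A *\<^sub>v x = 0\<^sub>v N"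
proof -
  define z where "z = M *\<^sub>v (A *\<^sub>v x)"
  have z: "z \<in> carrier_vec N" unfolding z_def using Mc A x by auto
  have "S *\<^sub>v z = 0\<^sub>v N" using R0 R_apply[OF x] unfolding z_def by simp
  then have "z = 0\<^sub>v N" using S_props(4)[OF z] z by (cases "z = 0\<^sub>v N", auto)
  moreover have "A *\<^sub>v x = K *\<^sub>v z" unfolding z_def using KMv A x by auto
  moreover have "K *\<^sub>v 0\<^sub>v N = 0\<^sub>v N" by (rule eq_vecI, insert Kc, auto simp: scalar_prod_def)
  ultimately show ?thesis by simp
qed

end


lemma mat_mult_zero_vec: "X \<in> carrier_mat r c \<Longrightarrow> X *\<^sub>v 0\<^sub>v c = (0\<^sub>v r :: complex vec)"
  by (rule eq_vecI, auto simp: scalar_prod_def)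

context setting begin

definition "H = mat_adjoint R * R"
definition "E = {x::real. x \<noteq> 0 \<and> eigenvalue H (complex_of_real x)}"
definition "rng x \<longleftrightarrow> (\<exists>w \<in> carrier_vec N. x = mat_adjoint A *\<^sub>v w)"

lemma aR: "mat_adjoint R \<in> carrier_mat n N" using Rc by auto
lemma Hc: "H \<in> carrier_mat n n" unfolding H_def using Rc aR by auto
lemma Hh: "mat_adjoint H = H" unfolding H_def using adj_mult[OF aR Rc] by simp

lemma Hq: assumes x: "x \<in> carrier_vec n"
  shows "(H *\<^sub>v x) \<bullet>c x = complex_of_real ((vnorm (R *\<^sub>v x))\<^sup>2)"
proof -
  have "H *\<^sub>v x = mat_adjoint R *\<^sub>v (R *\<^sub>v x)" unfolding H_def by (rule assoc_mult_mat_vec[OF aR Rc x])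
  then have "(H *\<^sub>v x) \<bullet>c x = (R *\<^sub>v x) \<bullet>c (R *\<^sub>v x)"
    using adj_mult_vec[OF aR _ x, of "R *\<^sub>v x"] Rc x by simp
  then show ?thesis by (simp add: cip_self)
qed

lemma sigma_eq: "min_sing_val R = sqrt (Min E)"
  unfolding min_sing_val_def E_def H_def ..

lemma contraction: "\<exists>m. 0 < m \<and> m \<le> 1 \<and> 
   (\<forall>x. x \<in> carrier_vec n \<longrightarrow> rng x \<longrightarrow> (vnorm (T *\<^sub>v x))\<^sup>2 \<le> (1 - m) * (vnorm x)\<^sup>2) \<and>
   (E \<noteq> {} \<longrightarrow> Min E = m) \<and> (E = {} \<longrightarrow> (\<forall>x. x \<in> carrier_vec n \<longrightarrow> rng x \<longrightarrow> x = 0\<^sub>v n))"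
proof -
  obtain U d where U: "unitary U n" and HU: "H * U = U * dmat n d" using spectral[OF Hc Hh] by blast
  have Uc: "U \<in> carrier_mat n n" using U unfolding unitary_def by auto
  have uc: "\<And>i. i < n \<Longrightarrow> col U i \<in> carrier_vec n" using Uc by auto
  have dR: "d i = (vnorm (R *\<^sub>v col U i))\<^sup>2" if i: "i < n" for i
  proof -
    have "(H *\<^sub>v col U i) \<bullet>c col U i = complex_of_real (d i) * (col U i \<bullet>c col U i)"
      unfolding eig_col[OF U Hc HU i] using uc[OF i] by (subst cip_smult_left, auto)
    also have "\<dots> = complex_of_real (d i)" using unitary_col[OF U i i] by simp
    finally have h: "(H *\<^sub>v col U i) \<bullet>c col U i = complex_of_real (d i)" .
    have "complex_of_real ((vnorm (R *\<^sub>v col U i))\<^sup>2) = complex_of_real (d i)"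
      using h Hq[OF uc[OF i]] by metis
    then show ?thesis by (simp only: of_real_eq_iff)
  qed
  have d0: "d i \<ge> 0" if "i < n" for i using dR[OF that] by simp
  have d1: "d i \<le> 1" if i: "i < n" for i
  proof -
    have "col U i \<bullet>c col U i = 1" using unitary_col[OF U i i] by simp
    then have "(vnorm (col U i))\<^sup>2 = 1" unfolding cip_self by (simp only: of_real_eq_1_iff)
    then show ?thesis using dR[OF i] Tx[OF uc[OF i]] by (smt (verit) zero_le_power2)
  qed
  have dA: "A *\<^sub>v col U i = 0\<^sub>v N" if i: "i < n" and di: "d i = 0" for i
  proof (rule Rx0[OF uc[OF i]])
    have "vnorm (R *\<^sub>v col U i) = 0" using dR[OF i] di by simp
    then show "R *\<^sub>v col U i = 0\<^sub>v N" using vnorm_zero_iff[of "R *\<^sub>v col U i"] Rc by simp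
  qed
  have zr: "(mat_adjoint U *\<^sub>v x) $ i = 0" if x: "x \<in> carrier_vec n" "rng x" and i: "i < n" and di: "d i = 0" for x i
  proof -
    obtain w where w: "w \<in> carrier_vec N" and xw: "x = mat_adjoint A *\<^sub>v w" using x(2) unfolding rng_def by auto
    have "(mat_adjoint U *\<^sub>v x) $ i = x \<bullet>c col U i" by (rule coord_index[OF Uc x(1) i])
    also have "\<dots> = w \<bullet>c (A *\<^sub>v col U i)" unfolding xw using adj_mult_vec[OF aA w uc[OF i]] A by simp
    also have "\<dots> = 0" unfolding dA[OF i di] using w by simp
    finally show ?thesis .
  qed
  have Esub: "E \<subseteq> d ` {..<n}"
  proof
    fix r assume "r \<in> E"
    then obtain v where v: "v \<in> carrier_vec n" "v \<noteq> 0\<^sub>v n" and Hv: "H *\<^sub>v v = complex_of_real r \<cdot>\<^sub>v v"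
      unfolding E_def eigenvalue_def eigenvector_def using Hc by auto
    define z where "z = mat_adjoint U *\<^sub>v v"
    have z: "z \<in> carrier_vec n" unfolding z_def by (rule mult_mat_vec_carrier[OF adj_carrier[OF Uc] v(1)])
    have "z \<noteq> 0\<^sub>v n"
    proof
      assume "z = 0\<^sub>v n"
      then have "v = U *\<^sub>v 0\<^sub>v n" using coord[OF U v(1)] unfolding z_def by simp
      then show False using v mat_mult_zero_vec[OF Uc] by simp
    qed
    then obtain i where i: "i < n" and zi: "z $ i \<noteq> 0" using z by (metis eq_vecI carrier_vecD index_zero_vec)
    have "(H *\<^sub>v v) \<bullet>c col U i = complex_of_real r * z $ i"
      unfolding Hv z_def coord_index[OF Uc v(1) i] using v uc[OF i] Uc by (subst cip_smult_left, auto)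
    moreover have "(H *\<^sub>v v) \<bullet>c col U i = complex_of_real (d i) * z $ i"
    proof -
      have "(H *\<^sub>v v) \<bullet>c col U i = v \<bullet>c (H *\<^sub>v col U i)" using adj_mult_vec[OF Hc v(1) uc[OF i]] Hh by simp
      also have "\<dots> = complex_of_real (d i) * (v \<bullet>c col U i)"
        unfolding eig_col[OF U Hc HU i] using v uc[OF i] Uc by (subst cip_smult_right, auto)
      finally show ?thesis unfolding z_def coord_index[OF Uc v(1) i] .
    qed
    ultimately have "r = d i" using zi by simp
    then show "r \<in> d ` {..<n}" using i by auto
  qed
  have dE: "d i \<in> E" if i: "i < n" and "d i \<noteq> 0" for i
    unfolding E_def eigenvalue_def eigenvector_def using that uc[OF i] unitary_col_nz[OF U i] eig_col[OF U Hc HU i] Hc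
    by auto
  have finE: "finite E" using Esub finite_subset by blast
  have normz: "(vnorm x)\<^sup>2 = (\<Sum>i<n. (cmod ((mat_adjoint U *\<^sub>v x) $ i))\<^sup>2)"
    and normR: "(vnorm (R *\<^sub>v x))\<^sup>2 = (\<Sum>i<n. d i * (cmod ((mat_adjoint U *\<^sub>v x) $ i))\<^sup>2)" if x: "x \<in> carrier_vec n" for x
  proof -
    note q = quad_form[OF U Hc HU x]
    show "(vnorm x)\<^sup>2 = (\<Sum>i<n. (cmod ((mat_adjoint U *\<^sub>v x) $ i))\<^sup>2)" by (rule q(1))
    show "(vnorm (R *\<^sub>v x))\<^sup>2 = (\<Sum>i<n. d i * (cmod ((mat_adjoint U *\<^sub>v x) $ i))\<^sup>2)"
      using q(2) Hq[OF x] by (simp only: of_real_eq_iff)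
  qed
  show ?thesis
  proof (cases "E = {}")
    case True
    have x0: "x = 0\<^sub>v n" if x: "x \<in> carrier_vec n" "rng x" for x
    proof -
      have "\<And>i. i < n \<Longrightarrow> d i = 0" using dE True by auto
      then have "(vnorm x)\<^sup>2 = 0" unfolding normz[OF x(1)] using zr[OF x] by simp
      then show ?thesis using vnorm_zero_iff[of x] x by simp
    qed
    have b: "\<forall>x. x \<in> carrier_vec n \<longrightarrow> rng x \<longrightarrow> (vnorm (T *\<^sub>v x))\<^sup>2 \<le> (1 - 1) * (vnorm x)\<^sup>2"
    proof (intro allI impI)
      fix x assume x: "x \<in> carrier_vec n" "rng x"
      have "T *\<^sub>v x = 0\<^sub>v n" using x0[OF x] mat_mult_zero_vec[OF Tc] by simp
      then have "vnorm (T *\<^sub>v x) = 0" using vnorm_zero_iff[of "T *\<^sub>v x"] by simp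
      then show "(vnorm (T *\<^sub>v x))\<^sup>2 \<le> (1 - 1) * (vnorm x)\<^sup>2" by simp
    qed
    show ?thesis using b True x0 by (intro exI[of _ 1]) auto
  next
    case False
    define m where "m = Min E"
    have mE: "m \<in> E" unfolding m_def using Min_in[OF finE False] .
    then obtain j where j: "j < n" "d j = m" using Esub by auto
    have m0: "m \<noteq> 0" using mE unfolding E_def by auto
    have mpos: "0 < m" using d0[OF j(1)] j m0 by simp
    have m1: "m \<le> 1" using d1[OF j(1)] j by simp
    have bound: "(vnorm (T *\<^sub>v x))\<^sup>2 \<le> (1 - m) * (vnorm x)\<^sup>2" if x: "x \<in> carrier_vec n" "rng x" for x
    proof -
      have "m * (vnorm x)\<^sup>2 \<le> (vnorm (R *\<^sub>v x))\<^sup>2"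
        unfolding normz[OF x(1)] normR[OF x(1)] sum_distrib_left
      proof (rule sum_mono)
        fix i assume "i \<in> {..<n}"
        then have i: "i < n" by simp
        show "m * (cmod ((mat_adjoint U *\<^sub>v x) $ i))\<^sup>2 \<le> d i * (cmod ((mat_adjoint U *\<^sub>v x) $ i))\<^sup>2"
        proof (cases "d i = 0")
          case True then show ?thesis using zr[OF x i] by simp
        next
          case False
          then have "m \<le> d i" unfolding m_def using Min_le[OF finE dE[OF i False]] by simp
          then show ?thesis by (simp add: mult_right_mono)
        qed
      qed
      then show ?thesis using Tx[OF x(1)] by (simp add: algebra_simps)
    qed
    show ?thesis using mpos m1 bound False unfolding m_def by blast
  qed
qed

end


lemma geom_lin: fixes s :: real assumes s: "0 \<le> s" "s \<le> 1"
  shows "(\<Sum>j<k+2. s ^ j) \<le> real (k+2) * (1 + s) / 2"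
proof (induct k)
  case 0 then show ?case by (simp add: numeral_2_eq_2)
next
  case (Suc k)
  have "s ^ (k + 2) \<le> s ^ 1" by (rule power_decreasing, insert s, auto)
  then have "s ^ (k + 2) \<le> (1 + s) / 2" using s by simp
  then show ?case using Suc by (simp add: field_simps)
qed

lemma geom_bound: fixes s :: real assumes s: "0 \<le> s" "s < 1"
  shows "(\<Sum>j<k. s ^ j) \<le> 1 / (1 - s)"
proof -
  have "(\<Sum>j<k. s ^ j) = (1 - s ^ k) / (1 - s)" using s sum_gp_strict[of s k] by simp
  also have "\<dots> \<le> 1 / (1 - s)" using s by (intro divide_right_mono, auto)
  finally show ?thesis .
qed

context setting begin

definition "Q p k = ((\<lambda>q. T *\<^sub>v q + (mat_adjoint A * M) *\<^sub>v p) ^^ k) (0\<^sub>v n)"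

lemma Q_dim: "dim_vec (Q p k) = n"
proof (induct k)
  case 0 then show ?case unfolding Q_def by simp
next
  case (Suc k)
  have "Q p (Suc k) = T *\<^sub>v Q p k + (mat_adjoint A * M) *\<^sub>v p" unfolding Q_def by simp
  then show ?case using aAM A by simp
qed

lemma Q_c: "Q p k \<in> carrier_vec n" using Q_dim by (rule carrier_vecI)

lemma rng_add: "rng x \<Longrightarrow> rng y \<Longrightarrow> rng (x + y)"
proof -
  assume "rng x" "rng y"
  then obtain v w where v: "v \<in> carrier_vec N" "x = mat_adjoint A *\<^sub>v v" and w: "w \<in> carrier_vec N" "y = mat_adjoint A *\<^sub>v w"
    unfolding rng_def by auto
  have "x + y = mat_adjoint A *\<^sub>v (v + w)" using v w aA by (simp add: mult_add_distrib_mat_vec)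
  then show "rng (x + y)" unfolding rng_def using v w by auto
qed

lemma rng_T: assumes "rng x" shows "rng (T *\<^sub>v x)"
proof -
  obtain w where w: "w \<in> carrier_vec N" "x = mat_adjoint A *\<^sub>v w" using assms unfolding rng_def by auto
  have x: "x \<in> carrier_vec n" using w aA by auto
  define u where "u = M *\<^sub>v (A *\<^sub>v x)"
  have u: "u \<in> carrier_vec N" unfolding u_def using Mc A x by auto
  have "T *\<^sub>v x = mat_adjoint A *\<^sub>v w - mat_adjoint A *\<^sub>v u" using T_apply[OF x] w unfolding u_def by simp
  also have "\<dots> = mat_adjoint A *\<^sub>v (w - u)" by (rule mult_minus_distrib_mat_vec[symmetric, OF aA w(1) u])
  finally show ?thesis unfolding rng_def using w u by auto
qed

lemma rng_y: assumes "d \<in> carrier_vec N" shows "rng ((mat_adjoint A * M) *\<^sub>v d)"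
  unfolding rng_def using assoc_mult_mat_vec[OF aA Mc assms] Mc assms by auto

lemma Q_diff: assumes p: "p \<in> carrier_vec N" and pt: "pt \<in> carrier_vec N"
  shows "Q pt (Suc k) - Q p (Suc k) = T *\<^sub>v (Q pt k - Q p k) + (mat_adjoint A * M) *\<^sub>v (pt - p)"
proof -
  have "Q pt (Suc k) = T *\<^sub>v Q pt k + (mat_adjoint A * M) *\<^sub>v pt" unfolding Q_def by simp
  moreover have "Q p (Suc k) = T *\<^sub>v Q p k + (mat_adjoint A * M) *\<^sub>v p" unfolding Q_def by simp
  moreover have "T *\<^sub>v (Q pt k - Q p k) = T *\<^sub>v Q pt k - T *\<^sub>v Q p k" 
    by (rule mult_minus_distrib_mat_vec[OF Tc Q_c Q_c])
  moreover have "(mat_adjoint A * M) *\<^sub>v (pt - p) = (mat_adjoint A * M) *\<^sub>v pt - (mat_adjoint A * M) *\<^sub>v p"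
    by (rule mult_minus_distrib_mat_vec[OF aAM pt p])
  ultimately show ?thesis by (intro eq_vecI, insert Tc aAM, auto)
qed

lemma err_bound:
  assumes p: "p \<in> carrier_vec N" and pt: "pt \<in> carrier_vec N"
    and m: "0 < m" "m \<le> 1"
    and contr: "\<forall>x. x \<in> carrier_vec n \<longrightarrow> rng x \<longrightarrow> (vnorm (T *\<^sub>v x))\<^sup>2 \<le> (1 - m) * (vnorm x)\<^sup>2"
  shows "rng (Q pt k - Q p k) \<and> vnorm (Q pt k - Q p k) \<le> 
     vnorm ((mat_adjoint A * M) *\<^sub>v (pt - p)) * (\<Sum>j<k. (sqrt (1 - m)) ^ j)"
proof (induct k)
  case 0
  have "Q pt 0 - Q p 0 = mat_adjoint A *\<^sub>v 0\<^sub>v N" unfolding Q_def using mat_mult_zero_vec[OF aA] by simp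
  then have "rng (Q pt 0 - Q p 0)" unfolding rng_def by auto
  moreover have "vnorm (Q pt 0 - Q p 0) = 0" unfolding Q_def using vnorm_zero_iff[of "0\<^sub>v n - 0\<^sub>v n"] by simp
  ultimately show ?case by simp
next
  case (Suc k)
  define e where "e = Q pt k - Q p k"
  define y where "y = (mat_adjoint A * M) *\<^sub>v (pt - p)"
  define s where "s = sqrt (1 - m)"
  have e: "e \<in> carrier_vec n" unfolding e_def using Q_c by auto
  have y: "y \<in> carrier_vec n" unfolding y_def using aAM p pt by auto
  have re: "rng e" and ne: "vnorm e \<le> vnorm y * (\<Sum>j<k. s ^ j)" using Suc unfolding e_def y_def s_def by auto
  have eq: "Q pt (Suc k) - Q p (Suc k) = T *\<^sub>v e + y" unfolding e_def y_def by (rule Q_diff[OF p pt])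
  have "rng (T *\<^sub>v e + y)" using rng_add[OF rng_T[OF re] rng_y] p pt unfolding y_def by auto
  moreover have "vnorm (T *\<^sub>v e + y) \<le> vnorm y * (\<Sum>j<Suc k. s ^ j)"
  proof -
    have s0: "s \<ge> 0" using assms(4) unfolding s_def by simp
    have sq: "s\<^sup>2 = 1 - m" using assms(4) unfolding s_def by simp
    have "(vnorm (T *\<^sub>v e))\<^sup>2 \<le> (s * vnorm e)\<^sup>2"
      using contr e re unfolding power_mult_distrib sq by simp
    then have Te: "vnorm (T *\<^sub>v e) \<le> s * vnorm e"
      by (rule power2_le_imp_le, insert s0 vnorm_nonneg[of e], simp)
    have "vnorm (T *\<^sub>v e + y) \<le> vnorm (T *\<^sub>v e) + vnorm y"
      by (rule vnorm_triangle, insert Tc e y, simp)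
    also have "\<dots> \<le> s * (vnorm y * (\<Sum>j<k. s ^ j)) + vnorm y"
      using Te ne s0 by (smt (verit) mult_left_mono)
    also have "\<dots> = vnorm y * (\<Sum>j<Suc k. s ^ j)"
      by (simp add: sum_distrib_left lessThan_Suc_eq_insert_0 sum.reindex algebra_simps)
    finally show ?thesis .
  qed
  ultimately show ?case unfolding eq y_def s_def by simp
qed

end


lemma stack_carrier: "\<forall>Aj\<in>set As. dim_col Aj = n \<Longrightarrow> stack_blocks As n \<in> carrier_mat (sum_list (map dim_row As)) n"
proof (induct As)
  case Nil then show ?case by (simp add: stack_blocks_def)
next
  case (Cons B Bs)
  have B: "B \<in> carrier_mat (dim_row B) n" using Cons(2) by (intro carrier_matI, auto)
  have "stack_blocks (B # Bs) n = B @\<^sub>r stack_blocks Bs n" by (simp add: stack_blocks_def)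
  then show ?case using carrier_append_rows[OF B Cons(1)] Cons(2) by simp
qed

theorem corollary3p3:
  fixes As :: "complex mat list" and n :: nat and \<gamma> :: real
    and p pt :: "complex vec" and k :: nat
  defines "A \<equiv> stack_blocks As n"
    and "N \<equiv> sum_list (map dim_row As)"
    and "\<sigma> \<equiv> sigma As n \<gamma>"
    and "\<delta> \<equiv> vnorm (mat_adjoint (stack_blocks As n) * M_mat As n \<gamma> *\<^sub>v (pt - p))"
    and "e \<equiv> iterate_q As n \<gamma> pt k - iterate_q As n \<gamma> p k"
  assumes "As \<noteq> []"
    and "\<forall>Aj \<in> set As. Aj \<in> carrier_mat (dim_row Aj) n \<and> 0 < dim_row Aj"
    and "vec_space.rank N A = N"
    and "\<gamma> > 0"
    and "p \<in> carrier_vec N" and "pt \<in> carrier_vec N"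
  shows "(2 \<le> k \<and> real k \<le> 2 / \<sigma>\<^sup>2 \<longrightarrow>
            vnorm e \<le> \<delta> * \<sigma>\<^sup>2 / (2 * (1 - sqrt (1 - \<sigma>\<^sup>2))) * real k)
       \<and> (real k > 2 / \<sigma>\<^sup>2 \<longrightarrow> vnorm e \<le> \<delta> / (1 - sqrt (1 - \<sigma>\<^sup>2)))"
proof -
  have Ac: "A \<in> carrier_mat N n" using stack_carrier[of As n] assms(7) unfolding A_def N_def by auto
  interpret st: setting A "blk_of As" N n \<gamma> using Ac assms(9) by (unfold_locales)
  have dimA: "dim_row A = N" using Ac by auto
  have D_eq: "D_mat As n g = st.Dg g" for g
    unfolding D_mat_def st.Dg_def st.G_def Let_def A_def[symmetric] dimA ..
  have L_eq: "L_mat As n = st.Lg"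
    unfolding L_mat_def st.Lg_def st.G_def Let_def A_def[symmetric] dimA ..
  have M_eq: "M_mat As n \<gamma> = st.M" unfolding M_mat_def st.M_def st.K_def D_eq L_eq ..
  have R_eq: "R_mat As n \<gamma> = st.R" unfolding R_mat_def st.R_def st.S_def D_eq M_eq A_def[symmetric] ..
  have sig: "\<sigma> = sqrt (Min st.E)" unfolding \<sigma>_def sigma_def R_eq st.sigma_eq ..
  have Q_eq: "iterate_q As n \<gamma> q j = st.Q q j" for q j
    unfolding iterate_q_def st.Q_def st.T_def Let_def M_eq A_def[symmetric] ..
  have e_eq: "e = st.Q pt k - st.Q p k" unfolding e_def Q_eq ..
  define y where "y = (mat_adjoint A * st.M) *\<^sub>v (pt - p)"
  have d_eq: "\<delta> = vnorm y" unfolding \<delta>_def y_def M_eq A_def[symmetric] ..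
  have p: "p \<in> carrier_vec N" and pt: "pt \<in> carrier_vec N" using assms(10,11) by auto
  have yc: "y \<in> carrier_vec n" unfolding y_def using st.aAM p pt by auto
  have yr: "st.rng y" unfolding y_def by (rule st.rng_y, insert p pt, auto)
  have ec: "e \<in> carrier_vec n" unfolding e_eq using st.Q_c by auto
  obtain m where m: "0 < m" "m \<le> 1"
    and contr: "\<forall>x. x \<in> carrier_vec n \<longrightarrow> st.rng x \<longrightarrow> (vnorm (st.T *\<^sub>v x))\<^sup>2 \<le> (1 - m) * (vnorm x)\<^sup>2"
    and mE: "st.E \<noteq> {} \<longrightarrow> Min st.E = m"
    and zE: "st.E = {} \<longrightarrow> (\<forall>x. x \<in> carrier_vec n \<longrightarrow> st.rng x \<longrightarrow> x = 0\<^sub>v n)"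
    using st.contraction by blast
  define s where "s = sqrt (1 - m)"
  have EB: "st.rng e" "vnorm e \<le> \<delta> * (\<Sum>j<k. s ^ j)"
    using st.err_bound[OF p pt m contr, of k] unfolding e_eq[symmetric] d_eq y_def s_def by auto
  show ?thesis
  proof (cases "st.E = {}")
    case True
    have "y = 0\<^sub>v n" using zE True yc yr by auto
    then have d0: "\<delta> = 0" unfolding d_eq using vnorm_zero_iff[of y] by simp
    have "e = 0\<^sub>v n" using zE True ec EB(1) by auto
    then have "vnorm e = 0" using vnorm_zero_iff[of e] by simp
    then show ?thesis using d0 by simp
  next
    case False
    have sm: "\<sigma>\<^sup>2 = m" unfolding sig using mE False m by simp
    have ss: "sqrt (1 - \<sigma>\<^sup>2) = s" unfolding sm s_def ..
    have s0: "0 \<le> s" and s1: "s < 1" using m unfolding s_def by auto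
    have d0: "\<delta> \<ge> 0" unfolding d_eq by (rule vnorm_nonneg)
    have part1: "vnorm e \<le> \<delta> * \<sigma>\<^sup>2 / (2 * (1 - sqrt (1 - \<sigma>\<^sup>2))) * real k" if k: "2 \<le> k"
    proof -
      obtain k' where k': "k = k' + 2" using k by (metis add.commute le_Suc_ex)
      have "(\<Sum>j<k. s ^ j) \<le> real k * (1 + s) / 2" unfolding k' using geom_lin[OF s0] s1 by simp
      then have le: "vnorm e \<le> \<delta> * (real k * (1 + s) / 2)" using EB(2) d0 by (smt (verit) mult_left_mono)
      have h: "\<sigma>\<^sup>2 = (1 - s) * (1 + s)" unfolding sm s_def using m by (simp add: algebra_simps)
      have ne: "1 - s \<noteq> 0" using s1 by simp
      have "\<delta> * \<sigma>\<^sup>2 / (2 * (1 - sqrt (1 - \<sigma>\<^sup>2))) * real k = \<delta> * ((1 - s) * (1 + s)) / (2 * (1 - s)) * real k"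
        by (subst ss, subst h, rule refl)
      also have "\<dots> = \<delta> * (real k * (1 + s) / 2)" using ne by (simp add: field_simps)
      finally have eq: "\<delta> * \<sigma>\<^sup>2 / (2 * (1 - sqrt (1 - \<sigma>\<^sup>2))) * real k = \<delta> * (real k * (1 + s) / 2)" .
      show ?thesis by (subst eq, rule le)
    qed
    have part2: "vnorm e \<le> \<delta> / (1 - sqrt (1 - \<sigma>\<^sup>2))"
    proof -
      have "(\<Sum>j<k. s ^ j) \<le> 1 / (1 - s)" by (rule geom_bound[OF s0 s1])
      then have "vnorm e \<le> \<delta> * (1 / (1 - s))" using EB(2) d0 by (smt (verit) mult_left_mono)
      then show ?thesis unfolding ss by simp
    qed
    show ?thesis using part1 part2 by auto
  qed
qed


end
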